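(* Every product-union congestion game has a monotone equilibrium selection (MES): for each demand vector $\mu$ there is an equilibrium load vector $x(\mu)$ such that every map $\mu\mapsto x_r(\mu)$ is nondecreasing with respect to each component of $\mu$.
   Context: A congestion game structure $\mathcal G=(\mathcal R,c,\mathcal S)$: finite resource set $\mathcal R$ with continuous nondecreasing costs $c_r:\mathbb R_+\to\mathbb R_+$, finite commodity set $\mathcal H$, each $h$ with a nonempty finite family $\mathcal S^h\subseteq2^{\mathcal R}$ of strategies. For demand $\mu\in\mathbb R_+^{\mathcal H}$, a feasible flow is $f=(f^h_s)$, $f^h_s\ge0$, $\sum_{s\in\mathcal S^h}f^h_s=\mu^h$; loads $x_r=\sum_h\sum_{s\in\mathcal S^h:r\in s}f^h_s$; strategy cost $c_s=\sum_{r\in s}c_r(x_r)$. A Wardrop equilibrium is a feasible flow with, for each $h$, some $\lambda^h$ such that $c_s=\lambda^h$ whenever $f^h_s>0$ and $c_s\ge\lambda^h$ for all $s\in\mathcal S^h$; equilibrium load vectors are load vectors of Wardrop equilibria. A singleton congestion game is one in which every strategy is a single resource. For two structures $\mathcal G_1=(\mathcal R_1,c_1,\mathcal S_1)$, $\mathcal G_2=(\mathcal R_2,c_2,\mathcal S_2)$ with disjoint resource sets and commodity sets $\mathcal H_1,\mathcal H_2$: the product $\mathcal G_1\otimes\mathcal G_2$ has resources $\mathcal R_1\cup\mathcal R_2$ with the original costs and commodities $i\otimes j$ for $(i,j)\in\mathcal H_1\times\mathcal H_2$ with strategy sets $\mathcal S^{i\otimes j}=\{s_1\cup s_2:(s_1,s_2)\in\mathcal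 S_1^i\times\mathcal S_2^j\}$; the union $\mathcal G_1\cup\mathcal G_2$ has resources $\mathcal R_1\cup\mathcal R_2$ with original costs and commodities $\mathcal H_1\sqcup\mathcal H_2$ with their original strategy sets. A product-union game is one obtained from singleton congestion games by finitely many product or union operations. *)

theory Defs
  imports "HOL-Analysis.Analysis"
begin

text \<open>A congestion game structure is represented by its resource set R :: 'r set,
a cost function c :: 'r => real => real (only its values on R matter), and a list S
of strategy families: commodity h (for h < length S) has strategy family S ! h,
a set of subsets of R.\<close>

type_synonym 'r strat_fam = "'r set set list"

definition admissible_costs :: "'r set \<Rightarrow> ('r \<Rightarrow> real \<Rightarrow> real) \<Rightarrow> bool" where
  "admissible_costs R c \<longleftrightarrow>
     (\<forall>r\<in>R. continuous_on {0..} (c r) \<and> mono_on {0..} (c r) \<and> (\<forall>t\<ge>0. c r t \<ge> 0))"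

definition prod_fams :: "'r strat_fam \<Rightarrow> 'r strat_fam \<Rightarrow> 'r strat_fam" where
  "prod_fams S1 S2 = concat (map (\<lambda>A. map (\<lambda>B. {s1 \<union> s2 | s1 s2. s1 \<in> A \<and> s2 \<in> B}) S2) S1)"

text \<open>Product-union games (resource set and strategy families); the costs are the
original costs on each resource, so a single global cost function is used.\<close>
inductive product_union :: "'r set \<Rightarrow> 'r strat_fam \<Rightarrow> bool" where
  singleton: "\<lbrakk> finite R; \<forall>F\<in>set S. F \<noteq> {} \<and> F \<subseteq> (\<lambda>r. {r}) ` R \<rbrakk>
              \<Longrightarrow> product_union R S"
| product: "\<lbrakk> product_union R1 S1; product_union R2 S2; R1 \<inter> R2 = {} \<rbrakk>
              \<Longrightarrow> product_union (R1 \<union> R2) (prod_fams S1 S2)"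
| union: "\<lbrakk> product_union R1 S1; product_union R2 S2; R1 \<inter> R2 = {} \<rbrakk>
              \<Longrightarrow> product_union (R1 \<union> R2) (S1 @ S2)"

definition feasible_flow :: "'r strat_fam \<Rightarrow> (nat \<Rightarrow> real) \<Rightarrow> (nat \<Rightarrow> 'r set \<Rightarrow> real) \<Rightarrow> bool" where
  "feasible_flow S \<mu> f \<longleftrightarrow>
     (\<forall>h<length S. (\<forall>s\<in>S ! h. f h s \<ge> 0) \<and> (\<Sum>s\<in>S ! h. f h s) = \<mu> h)"

definition load :: "'r strat_fam \<Rightarrow> (nat \<Rightarrow> 'r set \<Rightarrow> real) \<Rightarrow> 'r \<Rightarrow> real" where
  "load S f r = (\<Sum>h<length S. \<Sum>s\<in>{s \<in> S ! h. r \<in> s}. f h s)"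

definition strat_cost :: "('r \<Rightarrow> real \<Rightarrow> real) \<Rightarrow> 'r strat_fam \<Rightarrow> (nat \<Rightarrow> 'r set \<Rightarrow> real) \<Rightarrow> 'r set \<Rightarrow> real" where
  "strat_cost c S f s = (\<Sum>r\<in>s. c r (load S f r))"

definition wardrop_eq :: "('r \<Rightarrow> real \<Rightarrow> real) \<Rightarrow> 'r strat_fam \<Rightarrow> (nat \<Rightarrow> real) \<Rightarrow> (nat \<Rightarrow> 'r set \<Rightarrow> real) \<Rightarrow> bool" where
  "wardrop_eq c S \<mu> f \<longleftrightarrow> feasible_flow S \<mu> f \<and>
     (\<forall>h<length S. \<exists>lam. \<forall>s\<in>S ! h.
        (f h s > 0 \<longrightarrow> strat_cost c S f s = lam) \<and> strat_cost c S f s \<ge> lam)"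

definition eq_load_vector :: "'r set \<Rightarrow> ('r \<Rightarrow> real \<Rightarrow> real) \<Rightarrow> 'r strat_fam \<Rightarrow> (nat \<Rightarrow> real) \<Rightarrow> ('r \<Rightarrow> real) \<Rightarrow> bool" where
  "eq_load_vector R c S \<mu> x \<longleftrightarrow> (\<exists>f. wardrop_eq c S \<mu> f \<and> (\<forall>r\<in>R. x r = load S f r))"

definition demand :: "'r strat_fam \<Rightarrow> (nat \<Rightarrow> real) \<Rightarrow> bool" where
  "demand S \<mu> \<longleftrightarrow> (\<forall>h<length S. \<mu> h \<ge> 0)"

definition has_MES :: "'r set \<Rightarrow> ('r \<Rightarrow> real \<Rightarrow> real) \<Rightarrow> 'r strat_fam \<Rightarrow> bool" where
  "has_MES R c S \<longleftrightarrow> (\<exists>X :: (nat \<Rightarrow> real) \<Rightarrow> 'r \<Rightarrow> real.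
     (\<forall>\<mu>. demand S \<mu> \<longrightarrow> eq_load_vector R c S \<mu> (X \<mu>)) \<and>
     (\<forall>\<mu> h t r. demand S \<mu> \<and> h < length S \<and> \<mu> h \<le> t \<and> r \<in> R
         \<longrightarrow> X \<mu> r \<le> X (\<mu>(h := t)) r))"

end

theory Submission
  imports Defs
begin

definition ultra :: "'a filter \<Rightarrow> bool" where
  "ultra F \<longleftrightarrow> F \<noteq> bot \<and> (\<forall>P. eventually P F \<or> eventually (\<lambda>x. \<not> P x) F)"

lemma max_filter_ultra:
  assumes "F \<noteq> bot"
  assumes max: "\<And>G. G \<noteq> bot \<Longrightarrow> G \<le> F \<Longrightarrow> F = G"
  shows "ultra F"
  unfolding ultra_def
proof (intro conjI allI assms(1))
  fix P
  show "eventually P F \<or> (\<forall>\<^sub>Fx in F. \<not> P x)"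
  proof (rule disjCI)
    assume "\<not> (\<forall>\<^sub>Fx in F. \<not> P x)"
    then have "inf F (principal {x. P x}) \<noteq> bot"
      by (simp add: trivial_limit_def eventually_inf_principal not_eventually)
    then have F: "F = inf F (principal {x. P x})"
      by (rule max) simp
    show "eventually P F"
      by (subst F) (simp add: eventually_inf_principal)
  qed
qed

lemma ex_ultra_le:
  fixes F :: "'a filter"
  assumes F: "F \<noteq> bot"
  shows "\<exists>U\<le>F. ultra U"
proof -
  let ?X = "{G. G \<noteq> bot \<and> G \<le> F}"
  let ?R = "{(b, a). a \<noteq> bot \<and> a \<le> b \<and> b \<le> F}"
  have bot_notin_R: "c \<in> Chains ?R \<Longrightarrow> bot \<notin> c" for c
    by (auto simp: Chains_def)
  have [simp]: "Field ?R = ?X"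
    by (auto simp: Field_def bot_unique)
  have "\<exists>m\<in>Field ?R. \<forall>a\<in>Field ?R. (m, a) \<in> ?R \<longrightarrow> a = m" (is "\<exists>m\<in>?A. ?B m")
  proof (rule Zorns_po_lemma)
    show "Partial_order ?R"
      by (auto simp: partial_order_on_def preorder_on_def
          antisym_def refl_on_def trans_def Field_def bot_unique)
    show "\<exists>u\<in>Field ?R. \<forall>a\<in>C. (a, u) \<in> ?R" if C: "C \<in> Chains ?R" for C
    proof (simp, intro exI conjI ballI)
      have Inf_C: "Inf C \<noteq> bot" "Inf C \<le> F" if "C \<noteq> {}"
      proof -
        from C that have "Inf C = bot \<longleftrightarrow> (\<exists>x\<in>C. x = bot)"
          unfolding trivial_limit_def by (intro eventually_Inf_base) (auto simp: Chains_def)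
        with C show "Inf C \<noteq> bot"
          by (simp add: bot_notin_R)
        from that obtain x where "x \<in> C" by auto
        with C show "Inf C \<le> F"
          by (auto intro!: Inf_lower2[of x] simp: Chains_def)
      qed
      then have [simp]: "inf F (Inf C) = (if C = {} then F else Inf C)"
        using C by (auto simp add: inf_absorb2)
      from C show "inf F (Inf C) \<noteq> bot"
        by (simp add: F Inf_C)
      from C show "inf F (Inf C) \<le> F"
        by (simp add: Chains_def Inf_C F)
      with C show "inf F (Inf C) \<le> x" "x \<le> F" if "x \<in> C" for x
        using that  by (auto intro: Inf_lower simp: Chains_def)
    qed
  qed
  then obtain U where U: "U \<in> ?A" "?B U" ..
  show ?thesis
  proof (intro exI conjI)
    from U show "U \<le> F" by auto
    from U show "ultra U"
      by (auto intro!: max_filter_ultra)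
  qed
qed

lemma ultra_limit:
  fixes a :: "'a \<Rightarrow> real"
  assumes U: "ultra U" and B: "eventually (\<lambda>n. \<bar>a n\<bar> \<le> B) U"
  shows "\<exists>L. (a \<longlongrightarrow> L) U"
proof -
  let ?F = "filtermap a U"
  have Fb: "?F \<noteq> bot" using U by (simp add: ultra_def filtermap_bot_iff)
  have ev: "eventually (\<lambda>x. x \<in> {-B..B}) ?F"
    using B by (simp add: eventually_filtermap abs_le_iff eventually_mono)
  have "compact {-B..B}" by simp
  then obtain x where "x \<in> {-B..B}" and x: "inf (nhds x) ?F \<noteq> bot"
    using Fb ev unfolding compact_filter by blast
  have "?F \<le> nhds x"
  proof (rule filter_leI)
    fix P assume P: "eventually P (nhds x)"
    show "eventually P ?F"
    proof (rule ccontr)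
      assume "\<not> eventually P ?F"
      then have "eventually (\<lambda>y. \<not> P y) ?F"
        using U unfolding ultra_def eventually_filtermap by metis
      then have "eventually (\<lambda>y. False) (inf (nhds x) ?F)"
        using P by (auto simp: eventually_inf) 
      then show False using x by (simp add: trivial_limit_def)
    qed
  qed
  then show ?thesis unfolding filterlim_def by blast
qed

lemma ex_ultra_seq: "\<exists>U::nat filter. ultra U \<and> U \<le> sequentially"
  using ex_ultra_le[of "sequentially :: nat filter"] by auto

definition wf_game :: "'r set \<Rightarrow> 'r strat_fam \<Rightarrow> bool" where
  "wf_game R S \<longleftrightarrow> finite R \<and> (\<forall>F\<in>set S. \<forall>s\<in>F. s \<subseteq> R)"

lemma wf_fin_fam: "wf_game R S \<Longrightarrow> h < length S \<Longrightarrow> finite (S ! h)"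
  unfolding wf_game_def by (meson finite_Pow_iff finite_subset nth_mem subsetI PowI)

lemma wf_sub: "wf_game R S \<Longrightarrow> h < length S \<Longrightarrow> s \<in> S ! h \<Longrightarrow> s \<subseteq> R"
  unfolding wf_game_def by (meson nth_mem)

lemma wf_fin_strat: "wf_game R S \<Longrightarrow> h < length S \<Longrightarrow> s \<in> S ! h \<Longrightarrow> finite s"
  using wf_sub unfolding wf_game_def by (meson finite_subset)

lemma load_alt: "wf_game R S \<Longrightarrow>
   load S f q = (\<Sum>h<length S. \<Sum>s\<in>S ! h. if q \<in> s then f h s else 0)"
proof -
  assume wf: "wf_game R S"
  have "\<And>h. h < length S \<Longrightarrow> (\<Sum>s\<in>{s \<in> S ! h. q \<in> s}. f h s) = (\<Sum>s\<in>S ! h. if q \<in> s then f h s else 0)"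
    using sum.inter_filter[OF wf_fin_fam[OF wf]] by blast
  then show ?thesis unfolding load_def by simp
qed

definition move :: "(nat \<Rightarrow> 'r set \<Rightarrow> real) \<Rightarrow> nat \<Rightarrow> 'r set \<Rightarrow> 'r set \<Rightarrow> real \<Rightarrow> nat \<Rightarrow> 'r set \<Rightarrow> real" where
  "move f h s s' d = f(h := (f h)(s := f h s - d, s' := f h s' + d))"

lemma move_eq: "s \<noteq> s' \<Longrightarrow> move f h s s' d h' t =
   f h' t + (if h' = h \<and> t = s' then d else 0) - (if h' = h \<and> t = s then d else 0)"
  unfolding move_def by auto


lemma load_nonneg: "wf_game R S \<Longrightarrow> feasible_flow S \<mu> f \<Longrightarrow> 0 \<le> load S f r"
  unfolding load_def feasible_flow_def by (intro sum_nonneg) auto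

lemma load_le_total: assumes wf: "wf_game R S" and ff: "feasible_flow S \<mu> f"
  shows "load S f r \<le> (\<Sum>h<length S. \<mu> h)"
  unfolding load_def
proof (rule sum_mono)
  fix h assume h: "h \<in> {..<length S}"
  have "(\<Sum>s\<in>{s \<in> S ! h. r \<in> s}. f h s) \<le> (\<Sum>s\<in>S ! h. f h s)"
    using ff h wf_fin_fam[OF wf] unfolding feasible_flow_def by (intro sum_mono2) auto
  then show "(\<Sum>s\<in>{s \<in> S ! h. r \<in> s}. f h s) \<le> \<mu> h" using ff h unfolding feasible_flow_def by simp
qed

lemma flow_le_load: assumes wf: "wf_game R S" and ff: "feasible_flow S \<mu> f"
  and h: "h < length S" and s: "s \<in> S ! h" and r: "r \<in> s"
  shows "f h s \<le> load S f r"
proof -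
  have "f h s \<le> (\<Sum>s\<in>{s \<in> S ! h. r \<in> s}. f h s)"
    using ff h wf_fin_fam[OF wf h] s r unfolding feasible_flow_def
    by (intro member_le_sum) auto
  also have "\<dots> \<le> load S f r"
    unfolding load_def using ff h
    by (intro member_le_sum[where i=h and f="\<lambda>h. \<Sum>s\<in>{s \<in> S ! h. r \<in> s}. f h s"] sum_nonneg)
       (auto simp: feasible_flow_def)
  finally show ?thesis .
qed

lemma sum_if_single:
  assumes "finite A"
  shows "(\<Sum>t\<in>A. if t = a \<and> P t then (d::real) else 0) = (if a \<in> A \<and> P a then d else 0)"
proof -
  have "(\<Sum>t\<in>A. if t = a \<and> P t then d else 0) = (\<Sum>t\<in>A. if t = a then (if P a then d else 0) else 0)"
    by (intro sum.cong refl) auto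
  also have "\<dots> = (if a \<in> A \<and> P a then d else 0)"
    using assms by (simp add: sum.delta)
  finally show ?thesis .
qed

lemma sum_if_single2:
  assumes "h < (n::nat)" "a \<in> A' h" "\<And>h. finite (A' h)"
  shows "(\<Sum>h'<n. \<Sum>t\<in>A' h'. if t = a \<and> h' = h \<and> q \<in> t then (d::real) else 0) = (if q \<in> a then d else 0)"
proof -
  have "(\<Sum>h'<n. \<Sum>t\<in>A' h'. if t = a \<and> h' = h \<and> q \<in> t then (d::real) else 0)
      = (\<Sum>h'<n. if h' = h then (if q \<in> a then d else 0) else 0)"
  proof (intro sum.cong refl)
    fix h' show "(\<Sum>t\<in>A' h'. if t = a \<and> h' = h \<and> q \<in> t then d else 0) = (if h' = h then (if q \<in> a then d else 0) else 0)"
      using sum_if_single[OF assms(3)[of h'], of a "\<lambda>t. h' = h \<and> q \<in> t" d] assms(2) by auto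
  qed
  also have "\<dots> = (if q \<in> a then d else 0)" using assms(1) by (cases "q \<in> a") (simp_all add: sum.delta[of "{..<n}" h "\<lambda>_. d"])
  finally show ?thesis .
qed

lemma load_move:
  assumes wf: "wf_game R S" and h: "h < length S" and s: "s \<in> S ! h" "s' \<in> S ! h" "s \<noteq> s'"
  shows "load S (move f h s s' d) q = load S f q - (if q \<in> s then d else 0) + (if q \<in> s' then d else 0)"
proof -
  let ?A = "\<lambda>h'. if h' < length S then S ! h' else {}"
  have finA: "\<And>h'. finite (?A h')" using wf_fin_fam[OF wf] by auto
  have eqA: "\<And>h'. h' \<in> {..<length S} \<Longrightarrow> S ! h' = ?A h'" by auto
  have "load S (move f h s s' d) q = (\<Sum>h'<length S. \<Sum>t\<in>S ! h'.
     (if q \<in> t then f h' t else 0) + ((if t = s' \<and> h' = h \<and> q \<in> t then d else 0) - (if t = s \<and> h' = h \<and> q \<in> t then d else 0)))"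
  proof -
    have "\<And>h' t. (if q \<in> t then move f h s s' d h' t else 0) = (if q \<in> t then f h' t else 0) +
      ((if t = s' \<and> h' = h \<and> q \<in> t then d else 0) - (if t = s \<and> h' = h \<and> q \<in> t then d else 0))"
      using s(3) by (auto simp: move_eq)
    then show ?thesis unfolding load_alt[OF wf] by presburger
  qed
  also have "\<dots> = load S f q + ((\<Sum>h'<length S. \<Sum>t\<in>S ! h'. (if t = s' \<and> h' = h \<and> q \<in> t then d else 0))
      - (\<Sum>h'<length S. \<Sum>t\<in>S ! h'. (if t = s \<and> h' = h \<and> q \<in> t then d else 0)))"
    unfolding load_alt[OF wf] sum.distrib sum_subtractf using s(3) by simp
  also have "(\<Sum>h'<length S. \<Sum>t\<in>S ! h'. (if t = s' \<and> h' = h \<and> q \<in> t then d else 0)) =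
      (\<Sum>h'<length S. \<Sum>t\<in>?A h'. (if t = s' \<and> h' = h \<and> q \<in> t then d else 0))"
    by (intro sum.cong refl) auto
  also have "\<dots> = (if q \<in> s' then d else 0)"
    using sum_if_single2[where A'="?A", OF h _ finA] s h by auto
  also have "(\<Sum>h'<length S. \<Sum>t\<in>S ! h'. (if t = s \<and> h' = h \<and> q \<in> t then d else 0)) =
      (\<Sum>h'<length S. \<Sum>t\<in>?A h'. (if t = s \<and> h' = h \<and> q \<in> t then d else 0))"
    by (intro sum.cong refl) auto
  also have "\<dots> = (if q \<in> s then d else 0)"
    using sum_if_single2[where A'="?A", OF h _ finA] s h by auto
  finally show ?thesis by simp
qed

lemma feasible_move:
  assumes wf: "wf_game R S" and h: "h < length S" and s: "s \<in> S ! h" "s' \<in> S ! h" "s \<noteq> s'"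
    and ff: "feasible_flow S \<mu> f" and d: "0 \<le> d" "d \<le> f h s"
  shows "feasible_flow S \<mu> (move f h s s' d)"
  unfolding feasible_flow_def
proof (intro allI impI conjI ballI)
  fix h' t assume h': "h' < length S" and t: "t \<in> S ! h'"
  have "0 \<le> f h' t" using ff h' t unfolding feasible_flow_def by auto
  then show "0 \<le> move f h s s' d h' t"
    using d s unfolding move_eq[OF s(3)] by auto
next
  fix h' assume h': "h' < length S"
  have "(\<Sum>t\<in>S ! h'. move f h s s' d h' t) = (\<Sum>t\<in>S ! h'. f h' t) +
     ((\<Sum>t\<in>S ! h'. (if t = s' \<and> h' = h then d else 0)) - (\<Sum>t\<in>S ! h'. (if t = s \<and> h' = h then d else 0)))"
    unfolding move_eq[OF s(3)] sum.distrib sum_subtractf by (simp add: conj_commute)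
  also have "\<dots> = (\<Sum>t\<in>S ! h'. f h' t)"
    using sum_if_single[OF wf_fin_fam[OF wf h'], of s' "\<lambda>_. h' = h" d]
      sum_if_single[OF wf_fin_fam[OF wf h'], of s "\<lambda>_. h' = h" d] s by auto
  finally show "(\<Sum>t\<in>S ! h'. move f h s s' d h' t) = \<mu> h'" using ff h' unfolding feasible_flow_def by simp
qed

definition Gp :: "('r \<Rightarrow> real \<Rightarrow> real) \<Rightarrow> 'r \<Rightarrow> real \<Rightarrow> real" where
  "Gp g r t = integral {0..t} (g r)"

definition Phi :: "('r \<Rightarrow> real \<Rightarrow> real) \<Rightarrow> 'r set \<Rightarrow> 'r strat_fam \<Rightarrow> (nat \<Rightarrow> 'r set \<Rightarrow> real) \<Rightarrow> real" where
  "Phi g R S f = (\<Sum>r\<in>R. Gp g r (load S f r))"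

lemma adm_cont: assumes "0 \<le> a" "admissible_costs R g" "r \<in> R" shows "continuous_on {a..b} (g r)"
proof -
  have "continuous_on {0..} (g r)" using assms unfolding admissible_costs_def by auto
  then show ?thesis by (rule continuous_on_subset) (use assms(1) in auto)
qed

lemma Gp_bounds:
  assumes adm: "admissible_costs R g" and r: "r \<in> R" and ab: "0 \<le> a" "a \<le> b"
  shows "(b - a) * g r a \<le> Gp g r b - Gp g r a" "Gp g r b - Gp g r a \<le> (b - a) * g r b"
proof -
  have int0: "g r integrable_on {0..b}" by (rule integrable_continuous_interval, rule adm_cont[OF _ adm r]) simp
  have intab: "g r integrable_on {a..b}" by (rule integrable_continuous_interval, rule adm_cont[OF ab(1) adm r])
  have "integral {0..a} (g r) + integral {a..b} (g r) = integral {0..b} (g r)"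
    using Henstock_Kurzweil_Integration.integral_combine[OF ab int0] .
  then have eq: "Gp g r b - Gp g r a = integral {a..b} (g r)" unfolding Gp_def by simp
  have mono: "mono_on {0..} (g r)" using adm r unfolding admissible_costs_def by auto
  have "integral {a..b} (\<lambda>_. g r a) \<le> integral {a..b} (g r)"
    by (rule integral_le) (use intab ab in \<open>auto intro: mono_onD[OF mono]\<close>)
  then show "(b - a) * g r a \<le> Gp g r b - Gp g r a" using eq ab by (simp add: content_real)
  have "integral {a..b} (g r) \<le> integral {a..b} (\<lambda>_. g r b)"
    by (rule integral_le) (use intab ab in \<open>auto intro: mono_onD[OF mono]\<close>)
  then show "Gp g r b - Gp g r a \<le> (b - a) * g r b" using eq ab by (simp add: content_real)
qed

lemma Gp_zero: "Gp g r 0 = 0" unfolding Gp_def by simp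

lemma Gp_nonneg: assumes adm: "admissible_costs R g" and r: "r \<in> R" and t: "0 \<le> t"
  shows "0 \<le> Gp g r t"
proof -
  have "0 \<le> g r 0" using adm r unfolding admissible_costs_def by auto
  then have "0 \<le> (t - 0) * g r 0" using t by simp
  also have "\<dots> \<le> Gp g r t - Gp g r 0" by (rule Gp_bounds(1)[OF adm r order_refl t])
  finally show ?thesis by (simp add: Gp_zero)
qed

lemma Gp_cont: assumes adm: "admissible_costs R g" and r: "r \<in> R"
  shows "continuous_on {0..B} (Gp g r)"
  unfolding Gp_def
  by (rule indefinite_integral_continuous_1, rule integrable_continuous_interval, rule adm_cont[OF _ adm r]) simp

lemma Phi_nonneg: "admissible_costs R g \<Longrightarrow> wf_game R S \<Longrightarrow> feasible_flow S \<mu> f \<Longrightarrow> 0 \<le> Phi g R S f"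
  unfolding Phi_def by (intro sum_nonneg Gp_nonneg load_nonneg) auto

lemma feasible_exists:
  assumes wf: "wf_game R S" and ne: "\<forall>h<length S. S ! h \<noteq> {}" and dem: "demand S \<mu>"
  shows "\<exists>f. feasible_flow S \<mu> f"
proof -
  define f0 where "f0 h s = (if s = (SOME s. s \<in> S ! h) then \<mu> h else 0)" for h s
  have "feasible_flow S \<mu> f0"
    unfolding feasible_flow_def
  proof (intro allI impI conjI ballI)
    fix h s assume h: "h < length S"
    show "0 \<le> f0 h s" using dem h unfolding f0_def demand_def by auto
    have "(SOME s. s \<in> S ! h) \<in> S ! h" using ne h by (simp add: some_in_eq)
    then show "(\<Sum>s\<in>S ! h. f0 h s) = \<mu> h"
      unfolding f0_def using wf_fin_fam[OF wf h] by (simp add: sum.delta')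
  qed
  then show ?thesis by blast
qed

lemma flow_bound: "feasible_flow S \<mu> f \<Longrightarrow> wf_game R S \<Longrightarrow> h < length S \<Longrightarrow> s \<in> S ! h \<Longrightarrow> \<bar>f h s\<bar> \<le> \<mu> h"
proof -
  assume ff: "feasible_flow S \<mu> f" and wf: "wf_game R S" and h: "h < length S" and s: "s \<in> S ! h"
  have nn: "\<forall>s\<in>S ! h. 0 \<le> f h s" and sm: "(\<Sum>s\<in>S ! h. f h s) = \<mu> h" using ff h unfolding feasible_flow_def by auto
  have "f h s \<le> (\<Sum>s\<in>S ! h. f h s)" by (rule member_le_sum) (use s nn wf_fin_fam[OF wf h] in auto)
  then show ?thesis using nn s sm by auto
qed

lemma ultra_flow_limit:
  assumes U: "ultra U" and wf: "wf_game R S" and ff: "\<And>n. feasible_flow S \<mu> (F n)"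
  defines "f \<equiv> \<lambda>h s. Lim U (\<lambda>n. F n h s)"
  shows "feasible_flow S \<mu> f"
    and "\<And>h s. h < length S \<Longrightarrow> s \<in> S ! h \<Longrightarrow> ((\<lambda>n. F n h s) \<longlongrightarrow> f h s) U"
    and "\<And>r. ((\<lambda>n. load S (F n) r) \<longlongrightarrow> load S f r) U"
proof -
  have Ub: "U \<noteq> bot" using U unfolding ultra_def by auto
  show conv: "((\<lambda>n. F n h s) \<longlongrightarrow> f h s) U" if h: "h < length S" and s: "s \<in> S ! h" for h s
  proof -
    obtain L where "((\<lambda>n. F n h s) \<longlongrightarrow> L) U"
      using ultra_limit[OF U, of "\<lambda>n. F n h s" "\<mu> h"] flow_bound[OF ff wf h s] by auto
    then show ?thesis unfolding f_def using tendsto_Lim Ub by metis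
  qed
  show "feasible_flow S \<mu> f"
    unfolding feasible_flow_def
  proof (intro allI impI conjI ballI)
    fix h s assume h: "h < length S" and s: "s \<in> S ! h"
    show "0 \<le> f h s"
      by (rule tendsto_lowerbound[OF conv[OF h s]]) (use ff h s Ub in \<open>auto simp: feasible_flow_def\<close>)
  next
    fix h assume h: "h < length S"
    have "((\<lambda>n. \<Sum>s\<in>S ! h. F n h s) \<longlongrightarrow> (\<Sum>s\<in>S ! h. f h s)) U"
      by (intro tendsto_sum conv h)
    moreover have "(\<lambda>n. \<Sum>s\<in>S ! h. F n h s) = (\<lambda>n. \<mu> h)" using ff h unfolding feasible_flow_def by auto
    ultimately show "(\<Sum>s\<in>S ! h. f h s) = \<mu> h" using tendsto_unique[OF Ub] tendsto_const by metis
  qed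
  show "((\<lambda>n. load S (F n) r) \<longlongrightarrow> load S f r) U" for r
    unfolding load_def by (intro tendsto_sum conv) auto
qed

lemma exists_min_flow:
  assumes wf: "wf_game R S" and ne: "\<forall>h<length S. S ! h \<noteq> {}" and dem: "demand S \<mu>"
    and adm: "admissible_costs R g"
  shows "\<exists>f. feasible_flow S \<mu> f \<and> (\<forall>f'. feasible_flow S \<mu> f' \<longrightarrow> Phi g R S f \<le> Phi g R S f')"
proof -
  let ?V = "Phi g R S ` {f. feasible_flow S \<mu> f}"
  have Vne: "?V \<noteq> {}" using feasible_exists[OF wf ne dem] by auto
  have bdd: "bdd_below ?V"
  proof (rule bdd_belowI)
    fix x assume "x \<in> ?V" then show "0 \<le> x" using Phi_nonneg[OF adm wf] by auto
  qed
  define m where "m = Inf ?V"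
  have "\<forall>n. \<exists>f. feasible_flow S \<mu> f \<and> Phi g R S f < m + inverse (real (Suc n))"
  proof
    fix n
    have "Inf ?V < m + inverse (real (Suc n))" unfolding m_def by simp
    then show "\<exists>f. feasible_flow S \<mu> f \<and> Phi g R S f < m + inverse (real (Suc n))"
      using cInf_lessD[OF Vne] by auto
  qed
  then obtain F where F: "\<And>n. feasible_flow S \<mu> (F n)" "\<And>n. Phi g R S (F n) < m + inverse (real (Suc n))"
    by metis
  obtain U :: "nat filter" where U: "ultra U" "U \<le> sequentially" using ex_ultra_seq by blast
  have Ub: "U \<noteq> bot" using U unfolding ultra_def by auto
  define f where "f = (\<lambda>h s. Lim U (\<lambda>n. F n h s))"
  have ffl: "feasible_flow S \<mu> f" unfolding f_def by (rule ultra_flow_limit(1)[OF U(1) wf F(1)])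
  have lconv: "((\<lambda>n. load S (F n) r) \<longlongrightarrow> load S f r) U" for r
    unfolding f_def by (rule ultra_flow_limit(3)[OF U(1) wf F(1)])
  define B where "B = (\<Sum>h<length S. \<mu> h)"
  have inB: "load S (F n) r \<in> {0..B}" for n r
    using load_nonneg[OF wf F(1)] load_le_total[OF wf F(1)] unfolding B_def by auto
  have inB': "load S f r \<in> {0..B}" for r
    using load_nonneg[OF wf ffl] load_le_total[OF wf ffl] unfolding B_def by auto
  have phic: "((\<lambda>n. Phi g R S (F n)) \<longlongrightarrow> Phi g R S f) U"
    unfolding Phi_def
  proof (intro tendsto_sum)
    fix r assume r: "r \<in> R"
    show "((\<lambda>n. Gp g r (load S (F n) r)) \<longlongrightarrow> Gp g r (load S f r)) U"
      by (rule continuous_on_tendsto_compose[OF Gp_cont[OF adm r] lconv inB']) (use inB in \<open>simp add: always_eventually\<close>)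
  qed
  have mc: "((\<lambda>n. m + inverse (real (Suc n))) \<longlongrightarrow> m) U"
    using tendsto_mono[OF U(2) tendsto_add[OF tendsto_const LIMSEQ_inverse_real_of_nat]] by simp
  have le: "Phi g R S f \<le> m"
    by (rule tendsto_le[OF Ub mc phic]) (use F(2) less_imp_le in \<open>auto intro: always_eventually\<close>)
  show ?thesis
  proof (intro exI conjI allI impI)
    show "feasible_flow S \<mu> f" by (rule ffl)
    fix f' assume "feasible_flow S \<mu> f'"
    then have "m \<le> Phi g R S f'" unfolding m_def by (intro cInf_lower bdd) auto
    then show "Phi g R S f \<le> Phi g R S f'" using le by simp
  qed
qed

definition sing :: "'r set \<Rightarrow> 'r strat_fam \<Rightarrow> bool" where
  "sing R S \<longleftrightarrow> (\<forall>h<length S. S ! h \<subseteq> (\<lambda>r. {r}) ` R)"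

lemma no_improve:
  assumes wf: "wf_game R S" and sg: "sing R S" and adm: "admissible_costs R g"
    and ff: "feasible_flow S \<mu> f" and min: "\<forall>f'. feasible_flow S \<mu> f' \<longrightarrow> Phi g R S f \<le> Phi g R S f'"
    and h: "h < length S" and s: "s \<in> S ! h" and s': "s' \<in> S ! h" and pos: "f h s > 0"
  shows "strat_cost g S f s \<le> strat_cost g S f s'"
proof (rule ccontr)
  assume "\<not> ?thesis"
  then have lt: "strat_cost g S f s' < strat_cost g S f s" by simp
  obtain r where r: "r \<in> R" "s = {r}" using sg h s unfolding sing_def by auto
  obtain r' where r': "r' \<in> R" "s' = {r'}" using sg h s' unfolding sing_def by auto
  have ss': "s \<noteq> s'" using lt by auto
  then have rr': "r \<noteq> r'" using r r' by auto
  define x where "x = load S f r"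
  define x' where "x' = load S f r'"
  have cs: "strat_cost g S f s = g r x" unfolding strat_cost_def x_def r by simp
  have cs': "strat_cost g S f s' = g r' x'" unfolding strat_cost_def x'_def r' by simp
  define d where "d = g r x - g r' x'"
  have dpos: "d > 0" using lt cs cs' d_def by simp
  have x0: "0 \<le> x'" unfolding x'_def by (rule load_nonneg[OF wf ff])
  have fx: "f h s \<le> x" unfolding x_def by (rule flow_le_load[OF wf ff h s]) (simp add: r)
  have co: "continuous_on {0..} (g q)" if "q \<in> R" for q using adm that unfolding admissible_costs_def by auto
  obtain d1 where d1: "d1 > 0" "\<forall>t\<in>{0..}. dist t x' < d1 \<longrightarrow> dist (g r' t) (g r' x') < d / 2"
    using co[OF r'(1)] x0 dpos unfolding continuous_on_iff by (metis atLeast_iff half_gt_zero)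
  have x00: "0 \<le> x" using fx pos by simp
  obtain d2 where d2: "d2 > 0" "\<forall>t\<in>{0..}. dist t x < d2 \<longrightarrow> dist (g r t) (g r x) < d / 2"
    using co[OF r(1)] x00 dpos unfolding continuous_on_iff by (metis atLeast_iff half_gt_zero)
  define \<delta> where "\<delta> = min (f h s) (min d1 d2 / 2)"
  have \<delta>: "0 < \<delta>" "\<delta> \<le> f h s" "\<delta> < d1" "\<delta> < d2" using pos d1 d2 unfolding \<delta>_def by auto
  define f' where "f' = move f h s s' \<delta>"
  have ff': "feasible_flow S \<mu> f'" unfolding f'_def
    by (rule feasible_move[OF wf h s s' ss' ff]) (use \<delta> in auto)
  have lr: "load S f' r = x - \<delta>" unfolding f'_def x_def load_move[OF wf h s s' ss'] using r r' rr' by simp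
  have lr': "load S f' r' = x' + \<delta>" unfolding f'_def x'_def load_move[OF wf h s s' ss'] using r r' rr' by simp
  have lq: "load S f' q = load S f q" if "q \<notin> {r, r'}" for q
    unfolding f'_def load_move[OF wf h s s' ss'] using r r' that by simp
  have xd: "0 \<le> x - \<delta>" using \<delta> fx by simp
  have "Phi g R S f' - Phi g R S f = (\<Sum>q\<in>R. Gp g q (load S f' q) - Gp g q (load S f q))"
    unfolding Phi_def by (simp add: sum_subtractf)
  also have "\<dots> = (\<Sum>q\<in>{r, r'}. Gp g q (load S f' q) - Gp g q (load S f q))"
    by (rule sum.mono_neutral_right) (use wf r r' lq in \<open>auto simp: wf_game_def\<close>)
  also have "\<dots> = (Gp g r (x - \<delta>) - Gp g r x) + (Gp g r' (x' + \<delta>) - Gp g r' x')"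
    using rr' lr lr' x_def x'_def by simp
  also have "\<dots> \<le> - (\<delta> * g r (x - \<delta>)) + \<delta> * g r' (x' + \<delta>)"
    using Gp_bounds(1)[OF adm r(1) xd, of x] Gp_bounds(2)[OF adm r'(1) x0, of "x' + \<delta>"] \<delta> by simp
  also have "\<dots> < 0"
  proof -
    have "dist (g r (x - \<delta>)) (g r x) < d / 2" using d2(2) xd \<delta> by (simp add: dist_real_def)
    then have a: "g r (x - \<delta>) > g r x - d / 2" unfolding dist_real_def abs_less_iff by linarith
    have "dist (g r' (x' + \<delta>)) (g r' x') < d / 2" using d1(2) x0 \<delta> by (simp add: dist_real_def)
    then have b: "g r' (x' + \<delta>) < g r' x' + d / 2" unfolding dist_real_def abs_less_iff by linarith
    have "g r' (x' + \<delta>) - g r (x - \<delta>) < 0" using a b d_def by linarith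
    then have "\<delta> * (g r' (x' + \<delta>) - g r (x - \<delta>)) < 0" using \<delta>(1) by (simp add: mult_pos_neg)
    then show ?thesis by (simp add: algebra_simps)
  qed
  finally have "Phi g R S f' < Phi g R S f" by simp
  then show False using min ff' by fastforce
qed

lemma min_is_wardrop:
  assumes wf: "wf_game R S" and sg: "sing R S" and adm: "admissible_costs R g"
    and ff: "feasible_flow S \<mu> f" and min: "\<forall>f'. feasible_flow S \<mu> f' \<longrightarrow> Phi g R S f \<le> Phi g R S f'"
  shows "wardrop_eq g S \<mu> f"
  unfolding wardrop_eq_def
proof (intro conjI ff allI impI)
  fix h assume h: "h < length S"
  show "\<exists>lam. \<forall>s\<in>S ! h. (0 < f h s \<longrightarrow> strat_cost g S f s = lam) \<and> lam \<le> strat_cost g S f s"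
  proof (cases "S ! h = {}")
    case True then show ?thesis by simp
  next
    case False
    let ?C = "strat_cost g S f ` (S ! h)"
    have fin: "finite ?C" using wf_fin_fam[OF wf h] by simp
    have ne: "?C \<noteq> {}" using False by simp
    show ?thesis
    proof (intro exI ballI conjI impI)
      fix s assume s: "s \<in> S ! h"
      show "Min ?C \<le> strat_cost g S f s" using fin s by simp
      assume "0 < f h s"
      then have "\<forall>s'\<in>S ! h. strat_cost g S f s \<le> strat_cost g S f s'"
        using no_improve[OF wf sg adm ff min h s] by blast
      moreover obtain s' where "s' \<in> S ! h" "strat_cost g S f s' = Min ?C"
        using Min_in[OF fin ne] by auto
      ultimately show "strat_cost g S f s = Min ?C" using fin s by (metis Min_le antisym image_eqI)
    qed
  qed
qed

lemma singleton_eq_exists: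
  assumes wf: "wf_game R S" and sg: "sing R S" and ne: "\<forall>h<length S. S ! h \<noteq> {}"
    and dem: "demand S \<mu>" and adm: "admissible_costs R g"
  shows "\<exists>f. wardrop_eq g S \<mu> f"
  using exists_min_flow[OF wf ne dem adm] min_is_wardrop[OF wf sg adm] by blast

lemma sing_strat: "sing R S \<Longrightarrow> h < length S \<Longrightarrow> s \<in> S ! h \<Longrightarrow> \<exists>q\<in>R. s = {q}"
  unfolding sing_def by auto

lemma sum_load_D:
  assumes wf: "wf_game R S" and sg: "sing R S" and DR: "D \<subseteq> R"
  shows "(\<Sum>r\<in>D. load S f r) = (\<Sum>k<length S. \<Sum>s\<in>{s \<in> S ! k. s \<subseteq> D}. f k s)"
proof -
  have finD: "finite D" using wf DR unfolding wf_game_def by (meson finite_subset)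
  have "(\<Sum>r\<in>D. load S f r) = (\<Sum>r\<in>D. \<Sum>k<length S. \<Sum>s\<in>S ! k. if r \<in> s then f k s else 0)"
    by (simp add: load_alt[OF wf])
  also have "\<dots> = (\<Sum>k<length S. \<Sum>s\<in>S ! k. \<Sum>r\<in>D. if r \<in> s then f k s else 0)"
    by (subst sum.swap) (subst (2) sum.swap, rule refl)
  also have "\<dots> = (\<Sum>k<length S. \<Sum>s\<in>S ! k. if s \<subseteq> D then f k s else 0)"
  proof (intro sum.cong refl)
    fix k s assume k: "k \<in> {..<length S}" and s: "s \<in> S ! k"
    obtain q where q: "s = {q}" using sing_strat[OF sg _ s] k by auto
    have "(\<Sum>r\<in>D. if r \<in> s then f k s else 0) = (\<Sum>r\<in>D. if r = q then f k s else 0)"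
      by (intro sum.cong refl) (simp add: q)
    also have "\<dots> = (if s \<subseteq> D then f k s else 0)" using finD by (simp add: sum.delta' q)
    finally show "(\<Sum>r\<in>D. if r \<in> s then f k s else 0) = (if s \<subseteq> D then f k s else 0)" .
  qed
  also have "\<dots> = (\<Sum>k<length S. \<Sum>s\<in>{s \<in> S ! k. s \<subseteq> D}. f k s)"
  proof -
    have "\<And>k. k < length S \<Longrightarrow> (\<Sum>s\<in>S ! k. if s \<subseteq> D then f k s else 0) = (\<Sum>s\<in>{s \<in> S ! k. s \<subseteq> D}. f k s)"
      using sum.inter_filter[OF wf_fin_fam[OF wf]] by metis
    then show ?thesis by simp
  qed
  finally show ?thesis .
qed

lemma sing_mono:
  assumes wf: "wf_game R S" and sg: "sing R S"
    and mono: "\<And>r a b. r \<in> R \<Longrightarrow> 0 \<le> a \<Longrightarrow> a \<le> b \<Longrightarrow> g r a \<le> g r b"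
    and strict: "\<And>r a b. r \<in> R \<Longrightarrow> 0 \<le> a \<Longrightarrow> a < b \<Longrightarrow> g r a < g r b"
    and eq1: "wardrop_eq g S \<mu> f" and eq2: "wardrop_eq g S \<mu>' f'"
    and le: "\<forall>h<length S. \<mu> h \<le> \<mu>' h"
    and r: "r \<in> R"
  shows "load S f r \<le> load S f' r"
proof (rule ccontr)
  assume nle: "\<not> ?thesis"
  have ff: "feasible_flow S \<mu> f" and ff': "feasible_flow S \<mu>' f'" using eq1 eq2 unfolding wardrop_eq_def by auto
  define D where "D = {q \<in> R. load S f' q < load S f q}"
  have DR: "D \<subseteq> R" unfolding D_def by auto
  have finD: "finite D" using wf DR unfolding wf_game_def by (meson finite_subset)
  have rD: "r \<in> D" using nle r unfolding D_def by auto
  have strict_sum: "(\<Sum>q\<in>D. load S f' q) < (\<Sum>q\<in>D. load S f q)"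
    by (rule sum_strict_mono[OF finD]) (use rD D_def in auto)
  have cost: "strat_cost g S F {q} = g q (load S F q)" for F q unfolding strat_cost_def by simp
  have claimA: "f' k s2 = 0"
    if k: "k < length S" and s1: "s1 \<in> S ! k" "s1 \<subseteq> D" "f k s1 > 0"
      and s2: "s2 \<in> S ! k" "\<not> s2 \<subseteq> D" for k s1 s2
  proof -
    obtain p where p: "p \<in> R" "s1 = {p}" using sing_strat[OF sg k s1(1)] by auto
    obtain q where q: "q \<in> R" "s2 = {q}" using sing_strat[OF sg k s2(1)] by auto
    have pD: "p \<in> D" and qD: "q \<notin> D" using p q s1 s2 by auto
    obtain lam where lam: "\<forall>s\<in>S ! k. (f k s > 0 \<longrightarrow> strat_cost g S f s = lam) \<and> strat_cost g S f s \<ge> lam"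
      using eq1 k unfolding wardrop_eq_def by blast
    obtain lam' where lam': "\<forall>s\<in>S ! k. (f' k s > 0 \<longrightarrow> strat_cost g S f' s = lam') \<and> strat_cost g S f' s \<ge> lam'"
      using eq2 k unfolding wardrop_eq_def by blast
    have 1: "g p (load S f p) \<le> g q (load S f q)"
      using lam s1 s2 p q cost by metis
    have 2: "g q (load S f q) \<le> g q (load S f' q)"
      using mono[OF q(1) load_nonneg[OF wf ff]] qD q(1) unfolding D_def by auto
    have 3: "g p (load S f' p) < g p (load S f p)"
      using strict[OF p(1) load_nonneg[OF wf ff']] pD unfolding D_def by auto
    have 4: "lam' \<le> g p (load S f' p)" using lam' s1 p cost by metis
    have "\<not> f' k s2 > 0"
    proof
      assume "f' k s2 > 0"
      then have "g q (load S f' q) = lam'" using lam' s2 q cost by metis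
      then show False using 1 2 3 4 by linarith
    qed
    moreover have "f' k s2 \<ge> 0" using ff' k s2 unfolding feasible_flow_def by auto
    ultimately show ?thesis by simp
  qed
  have Pk: "(\<Sum>s\<in>{s \<in> S ! k. s \<subseteq> D}. f k s) \<le> (\<Sum>s\<in>{s \<in> S ! k. s \<subseteq> D}. f' k s)"
    if k: "k \<in> {..<length S}" for k
  proof -
    have k': "k < length S" using k by simp
    have fin: "finite (S ! k)" by (rule wf_fin_fam[OF wf k'])
    have nn: "\<forall>s\<in>S ! k. 0 \<le> f k s" "\<forall>s\<in>S ! k. 0 \<le> f' k s"
      using ff ff' k' unfolding feasible_flow_def by auto
    show ?thesis
    proof (cases "\<exists>s1\<in>S ! k. s1 \<subseteq> D \<and> f k s1 > 0")
      case True
      then obtain s1 where s1: "s1 \<in> S ! k" "s1 \<subseteq> D" "f k s1 > 0" by auto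
      have "(\<Sum>s\<in>{s \<in> S ! k. s \<subseteq> D}. f k s) \<le> (\<Sum>s\<in>S ! k. f k s)"
        by (rule sum_mono2[OF fin]) (use nn in auto)
      also have "\<dots> = \<mu> k" using ff k' unfolding feasible_flow_def by auto
      also have "\<dots> \<le> \<mu>' k" using le k' by auto
      also have "\<dots> = (\<Sum>s\<in>S ! k. f' k s)" using ff' k' unfolding feasible_flow_def by auto
      also have "\<dots> = (\<Sum>s\<in>{s \<in> S ! k. s \<subseteq> D}. f' k s)"
        by (rule sum.mono_neutral_right[OF fin]) (use claimA[OF k' s1] in auto)
      finally show ?thesis .
    next
      case False
      then have "(\<Sum>s\<in>{s \<in> S ! k. s \<subseteq> D}. f k s) \<le> 0"
        by (intro sum_nonpos) auto
      also have "0 \<le> (\<Sum>s\<in>{s \<in> S ! k. s \<subseteq> D}. f' k s)" by (intro sum_nonneg) (use nn in auto)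
      finally show ?thesis .
    qed
  qed
  have "(\<Sum>q\<in>D. load S f q) \<le> (\<Sum>q\<in>D. load S f' q)"
    unfolding sum_load_D[OF wf sg DR] by (rule sum_mono) (rule Pk)
  then show False using strict_sum by simp
qed

lemma limit_wardrop:
  assumes U: "ultra U" and wf: "wf_game R S" and adm: "admissible_costs R c"
    and eqn: "\<And>n. wardrop_eq (\<lambda>r t. c r t + e n * t) S \<mu> (F n)"
    and e: "(e \<longlongrightarrow> 0) U"
  shows "wardrop_eq c S \<mu> (\<lambda>h s. Lim U (\<lambda>n. F n h s))"
proof -
  define f where "f = (\<lambda>h s. Lim U (\<lambda>n. F n h s))"
  have Ub: "U \<noteq> bot" using U unfolding ultra_def by auto
  have ffn: "feasible_flow S \<mu> (F n)" for n using eqn[of n] unfolding wardrop_eq_def by auto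
  have ff: "feasible_flow S \<mu> f" unfolding f_def by (rule ultra_flow_limit(1)[OF U wf ffn])
  have conv: "((\<lambda>n. F n h s) \<longlongrightarrow> f h s) U" if "h < length S" "s \<in> S ! h" for h s
    unfolding f_def by (rule ultra_flow_limit(2)[OF U wf ffn that])
  have lconv: "((\<lambda>n. load S (F n) r) \<longlongrightarrow> load S f r) U" for r
    unfolding f_def by (rule ultra_flow_limit(3)[OF U wf ffn])
  have cconv: "((\<lambda>n. strat_cost (\<lambda>r t. c r t + e n * t) S (F n) s) \<longlongrightarrow> strat_cost c S f s) U"
    if h: "h < length S" and s: "s \<in> S ! h" for h s
    unfolding strat_cost_def
  proof (rule tendsto_sum)
    fix r assume "r \<in> s"
    then have r: "r \<in> R" using wf_sub[OF wf h s] by auto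
    have co: "continuous_on {0..} (c r)" using adm r unfolding admissible_costs_def by auto
    have "((\<lambda>n. c r (load S (F n) r)) \<longlongrightarrow> c r (load S f r)) U"
      by (rule continuous_on_tendsto_compose[OF co lconv])
         (use load_nonneg[OF wf ff] load_nonneg[OF wf ffn] in \<open>auto intro: always_eventually\<close>)
    moreover have "((\<lambda>n. e n * load S (F n) r) \<longlongrightarrow> 0 * load S f r) U"
      by (rule tendsto_mult[OF e lconv])
    ultimately show "((\<lambda>n. c r (load S (F n) r) + e n * load S (F n) r) \<longlongrightarrow> c r (load S f r)) U"
      using tendsto_add by fastforce
  qed
  have "wardrop_eq c S \<mu> f"
    unfolding wardrop_eq_def
  proof (intro conjI ff allI impI)
    fix h assume h: "h < length S"
    show "\<exists>lam. \<forall>s\<in>S ! h. (0 < f h s \<longrightarrow> strat_cost c S f s = lam) \<and> lam \<le> strat_cost c S f s"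
    proof (cases "S ! h = {}")
      case True then show ?thesis by simp
    next
      case False
      let ?C = "strat_cost c S f ` (S ! h)"
      have fin: "finite ?C" using wf_fin_fam[OF wf h] by simp
      have ne: "?C \<noteq> {}" using False by simp
      show ?thesis
      proof (intro exI ballI conjI impI)
        fix s assume s: "s \<in> S ! h"
        show "Min ?C \<le> strat_cost c S f s" using fin s by simp
        assume pos: "0 < f h s"
        have evpos: "eventually (\<lambda>n. 0 < F n h s) U" using order_tendstoD(1)[OF conv[OF h s] pos] .
        have le: "strat_cost c S f s \<le> strat_cost c S f s'" if s': "s' \<in> S ! h" for s'
        proof (rule tendsto_le[OF Ub cconv[OF h s'] cconv[OF h s]])
          show "eventually (\<lambda>n. strat_cost (\<lambda>r t. c r t + e n * t) S (F n) s
                   \<le> strat_cost (\<lambda>r t. c r t + e n * t) S (F n) s') U"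
          proof (rule eventually_mono[OF evpos])
            fix n assume p: "0 < F n h s"
            obtain lam where lam: "\<forall>s\<in>S ! h. (F n h s > 0 \<longrightarrow> strat_cost (\<lambda>r t. c r t + e n * t) S (F n) s = lam)
                  \<and> strat_cost (\<lambda>r t. c r t + e n * t) S (F n) s \<ge> lam"
              using eqn[of n] h unfolding wardrop_eq_def by blast
            show "strat_cost (\<lambda>r t. c r t + e n * t) S (F n) s \<le> strat_cost (\<lambda>r t. c r t + e n * t) S (F n) s'"
              using lam s s' p by metis
          qed
        qed
        obtain s' where "s' \<in> S ! h" "strat_cost c S f s' = Min ?C"
          using Min_in[OF fin ne] by auto
        then show "strat_cost c S f s = Min ?C" using le fin s by (metis Min_le antisym image_eqI)
      qed
    qed
  qed
  then show ?thesis unfolding f_def .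
qed

theorem sing_MES:
  assumes wf: "wf_game R S" and sg: "sing R S" and ne: "\<forall>h<length S. S ! h \<noteq> {}"
    and adm: "admissible_costs R c"
  shows "has_MES R c S"
proof -
  define e where "e n = inverse (real (Suc n))" for n :: nat
  define G where "G n = (\<lambda>r t. c r t + e n * t)" for n
  have epos: "0 < e n" for n unfolding e_def by simp
  have cmono: "c r a \<le> c r b" if "r \<in> R" "0 \<le> a" "a \<le> b" for r a b
    using adm that unfolding admissible_costs_def by (meson atLeast_iff mono_onD order_trans)
  have admG: "admissible_costs R (G n)" for n
    unfolding admissible_costs_def
  proof (intro ballI conjI allI impI)
    fix r assume r: "r \<in> R"
    have co: "continuous_on {0..} (c r)" using adm r unfolding admissible_costs_def by auto
    show "continuous_on {0..} (G n r)" unfolding G_def by (intro continuous_intros co)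
    show "mono_on {0..} (G n r)" unfolding G_def
      by (rule mono_onI) (use cmono[OF r] epos[of n] in \<open>auto intro!: add_mono mult_left_mono\<close>)
    fix t :: real assume "0 \<le> t"
    then show "0 \<le> G n r t" unfolding G_def using adm r epos[of n] unfolding admissible_costs_def by auto
  qed
  have Gmono: "G n r a \<le> G n r b" if "r \<in> R" "0 \<le> a" "a \<le> b" for n r a b
    unfolding G_def using cmono[OF that] epos[of n] that by (auto intro!: add_mono mult_left_mono)
  have Gstrict: "G n r a < G n r b" if "r \<in> R" "0 \<le> a" "a < b" for n r a b
    unfolding G_def using cmono[OF that(1,2)] epos[of n] that by (auto intro!: add_le_less_mono)
  define FF where "FF n \<mu> = (SOME f. wardrop_eq (G n) S \<mu> f)" for n \<mu>
  have FF: "wardrop_eq (G n) S \<mu> (FF n \<mu>)" if "demand S \<mu>" for n \<mu>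
    unfolding FF_def using singleton_eq_exists[OF wf sg ne that admG] by (rule someI_ex)
  obtain U :: "nat filter" where U: "ultra U" "U \<le> sequentially" using ex_ultra_seq by blast
  have Ub: "U \<noteq> bot" using U unfolding ultra_def by auto
  have econv: "(e \<longlongrightarrow> 0) U" unfolding e_def by (rule tendsto_mono[OF U(2) LIMSEQ_inverse_real_of_nat])
  define lf where "lf \<mu> = (\<lambda>h s. Lim U (\<lambda>n. FF n \<mu> h s))" for \<mu>
  define X where "X \<mu> r = load S (lf \<mu>) r" for \<mu> r
  have ffn: "feasible_flow S \<mu> (FF n \<mu>)" if "demand S \<mu>" for n \<mu>
    using FF[OF that] unfolding wardrop_eq_def by auto
  have lconv: "((\<lambda>n. load S (FF n \<mu>) r) \<longlongrightarrow> X \<mu> r) U" if "demand S \<mu>" for \<mu> r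
    unfolding X_def lf_def by (rule ultra_flow_limit(3)[OF U(1) wf ffn[OF that]])
  show ?thesis
    unfolding has_MES_def
  proof (intro exI conjI allI impI)
    fix \<mu> assume dem: "demand S \<mu>"
    have "wardrop_eq c S \<mu> (lf \<mu>)"
      unfolding lf_def by (rule limit_wardrop[OF U(1) wf adm _ econv]) (use FF[OF dem] in \<open>simp add: G_def\<close>)
    then show "eq_load_vector R c S \<mu> (X \<mu>)" unfolding eq_load_vector_def X_def by blast
  next
    fix \<mu> h t r assume a: "demand S \<mu> \<and> h < length S \<and> \<mu> h \<le> t \<and> r \<in> R"
    then have dem: "demand S \<mu>" and h: "h < length S" and t: "\<mu> h \<le> t" and r: "r \<in> R" by auto
    have dem': "demand S (\<mu>(h := t))" using dem t h unfolding demand_def by (auto intro: order_trans)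
    have le: "\<forall>k<length S. \<mu> k \<le> (\<mu>(h := t)) k" using t by auto
    have "load S (FF n \<mu>) r \<le> load S (FF n (\<mu>(h := t))) r" for n
      by (rule sing_mono[OF wf sg Gmono Gstrict FF[OF dem] FF[OF dem'] le r])
    then show "X \<mu> r \<le> X (\<mu>(h := t)) r"
      by (intro tendsto_le[OF Ub lconv[OF dem'] lconv[OF dem]]) (auto intro: always_eventually)
  qed
qed

definition trunc :: "nat \<Rightarrow> (nat \<Rightarrow> real) \<Rightarrow> nat \<Rightarrow> real" where
  "trunc n \<mu> = (\<lambda>k. if k < n then \<mu> k else 0)"

lemma wardrop_cong: "(\<forall>h<length S. \<mu> h = \<mu>' h) \<Longrightarrow> wardrop_eq c S \<mu> f = wardrop_eq c S \<mu>' f"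
  by (simp add: wardrop_eq_def feasible_flow_def)

lemma demand_trunc: "demand S \<mu> \<Longrightarrow> demand S (trunc n \<mu>)"
  unfolding demand_def trunc_def by auto

lemma load_outside: "wf_game R S \<Longrightarrow> r \<notin> R \<Longrightarrow> load S f r = 0"
proof -
  assume wf: "wf_game R S" and r: "r \<notin> R"
  have "\<forall>h\<in>{..<length S}. (\<Sum>s\<in>{s \<in> S ! h. r \<in> s}. f h s) = 0"
  proof
    fix h assume "h \<in> {..<length S}"
    then have e: "{s \<in> S ! h. r \<in> s} = {}" using wf_sub[OF wf] r by auto
    show "(\<Sum>s\<in>{s \<in> S ! h. r \<in> s}. f h s) = 0" by (simp only: e sum.empty)
  qed
  then show ?thesis unfolding load_def by (rule sum.neutral)
qed

lemma sum_split_add: "(\<Sum>h<n1 + n2. F h) = (\<Sum>h<n1. F h) + (\<Sum>h<n2. F (h + n1))" for F :: "nat \<Rightarrow> real"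
proof -
  have "(\<Sum>h<n1 + n2. F h) = (\<Sum>h\<in>{0..<n1}. F h) + (\<Sum>h\<in>{n1..<n1 + n2}. F h)"
    by (simp add: atLeast0LessThan[symmetric] sum.atLeastLessThan_concat)
  also have "(\<Sum>h\<in>{n1..<n1 + n2}. F h) = (\<Sum>h\<in>{0..<n2}. F (h + n1))"
    using sum.shift_bounds_nat_ivl[of F 0 n1 n2] by (simp add: add.commute)
  finally show ?thesis by (simp add: atLeast0LessThan)
qed

lemma load_append: "load (S1 @ S2) f r = load S1 f r + load S2 (\<lambda>h. f (h + length S1)) r"
  unfolding load_def by (simp add: sum_split_add nth_append)

lemma wf_append: "wf_game R1 S1 \<Longrightarrow> wf_game R2 S2 \<Longrightarrow> wf_game (R1 \<union> R2) (S1 @ S2)"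
  unfolding wf_game_def by auto

lemma adm_sub: "admissible_costs R c \<Longrightarrow> R' \<subseteq> R \<Longrightarrow> admissible_costs R' c"
  unfolding admissible_costs_def by auto

lemma union_MES:
  assumes wf1: "wf_game R1 S1" and wf2: "wf_game R2 S2" and disj: "R1 \<inter> R2 = {}"
    and M1: "has_MES R1 c S1" and M2: "has_MES R2 c S2"
  shows "has_MES (R1 \<union> R2) c (S1 @ S2)"
proof -
  define n1 where "n1 = length S1"
  define n2 where "n2 = length S2"
  obtain X1 where X1: "\<forall>\<mu>. demand S1 \<mu> \<longrightarrow> eq_load_vector R1 c S1 \<mu> (X1 \<mu>)"
    "\<forall>\<mu> h t r. demand S1 \<mu> \<and> h < length S1 \<and> \<mu> h \<le> t \<and> r \<in> R1 \<longrightarrow> X1 \<mu> r \<le> X1 (\<mu>(h := t)) r"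
    using M1 unfolding has_MES_def by blast
  obtain X2 where X2: "\<forall>\<mu>. demand S2 \<mu> \<longrightarrow> eq_load_vector R2 c S2 \<mu> (X2 \<mu>)"
    "\<forall>\<mu> h t r. demand S2 \<mu> \<and> h < length S2 \<and> \<mu> h \<le> t \<and> r \<in> R2 \<longrightarrow> X2 \<mu> r \<le> X2 (\<mu>(h := t)) r"
    using M2 unfolding has_MES_def by blast
  define sh where "sh \<mu> = trunc n2 (\<lambda>k. \<mu> (k + n1))" for \<mu> :: "nat \<Rightarrow> real"
  define X where "X \<mu> r = (if r \<in> R1 then X1 (trunc n1 \<mu>) r else X2 (sh \<mu>) r)" for \<mu> r
  have dem1: "demand S1 (trunc n1 \<mu>)" if "demand (S1 @ S2) \<mu>" for \<mu>
    using that unfolding demand_def trunc_def n1_def by auto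
  have dem2: "demand S2 (sh \<mu>)" if "demand (S1 @ S2) \<mu>" for \<mu>
    using that unfolding demand_def trunc_def n1_def n2_def sh_def by auto
  show ?thesis
    unfolding has_MES_def
  proof (intro exI conjI allI impI)
    fix \<mu> assume dem: "demand (S1 @ S2) \<mu>"
    obtain f1 where f1: "wardrop_eq c S1 (trunc n1 \<mu>) f1" "\<forall>r\<in>R1. X1 (trunc n1 \<mu>) r = load S1 f1 r"
      using X1(1) dem1[OF dem] unfolding eq_load_vector_def by blast
    obtain f2 where f2: "wardrop_eq c S2 (sh \<mu>) f2" "\<forall>r\<in>R2. X2 (sh \<mu>) r = load S2 f2 r"
      using X2(1) dem2[OF dem] unfolding eq_load_vector_def by blast
    define f where "f h = (if h < n1 then f1 h else f2 (h - n1))" for h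
    have l1: "load S1 f r = load S1 f1 r" for r
      unfolding load_def f_def n1_def by (intro sum.cong refl) auto
    have l2: "load S2 (\<lambda>h. f (h + length S1)) r = load S2 f2 r" for r
      unfolding load_def f_def n1_def by simp
    have lR1: "load (S1 @ S2) f r = load S1 f1 r" if "r \<in> R1" for r
      using load_append[of S1 S2 f r] l1 l2 load_outside[OF wf2, of r f2] that disj by auto
    have lR2: "load (S1 @ S2) f r = load S2 f2 r" if "r \<in> R2" for r
      using load_append[of S1 S2 f r] l1 l2 load_outside[OF wf1, of r f1] that disj by auto
    have sc1: "strat_cost c (S1 @ S2) f s = strat_cost c S1 f1 s" if "h < n1" "s \<in> S1 ! h" for h s
      unfolding strat_cost_def using wf_sub[OF wf1 _ that(2)] that(1) lR1 unfolding n1_def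
      by (intro sum.cong refl) auto
    have sc2: "strat_cost c (S1 @ S2) f s = strat_cost c S2 f2 s" if "h < n2" "s \<in> S2 ! h" for h s
      unfolding strat_cost_def using wf_sub[OF wf2 _ that(2)] that(1) lR2 unfolding n2_def
      by (intro sum.cong refl) auto
    have weq: "wardrop_eq c (S1 @ S2) \<mu> f"
      unfolding wardrop_eq_def feasible_flow_def
    proof (rule conjI; intro allI impI)
      fix h assume h: "h < length (S1 @ S2)"
      show "(\<forall>s\<in>(S1 @ S2) ! h. 0 \<le> f h s) \<and> (\<Sum>s\<in>(S1 @ S2) ! h. f h s) = \<mu> h"
      proof (cases "h < n1")
        case True
        then show ?thesis using f1(1) unfolding wardrop_eq_def feasible_flow_def f_def n1_def trunc_def
          by (auto simp: nth_append)
      next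
        case False
        then have "h - n1 < n2" using h unfolding n1_def n2_def by auto
        then show ?thesis using False f2(1) unfolding wardrop_eq_def feasible_flow_def f_def n1_def n2_def trunc_def sh_def
          by (auto simp: nth_append)
      qed
    next
      fix h assume h: "h < length (S1 @ S2)"
      show "\<exists>lam. \<forall>s\<in>(S1 @ S2) ! h. (0 < f h s \<longrightarrow> strat_cost c (S1 @ S2) f s = lam) \<and> lam \<le> strat_cost c (S1 @ S2) f s"
      proof (cases "h < n1")
        case True
        obtain lam where lam: "\<forall>s\<in>S1 ! h. (0 < f1 h s \<longrightarrow> strat_cost c S1 f1 s = lam) \<and> lam \<le> strat_cost c S1 f1 s"
          using f1(1) True unfolding wardrop_eq_def n1_def by blast
        show ?thesis using lam sc1[OF True] True unfolding f_def n1_def by (auto simp: nth_append)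
      next
        case False
        then have h2: "h - n1 < n2" using h unfolding n1_def n2_def by auto
        obtain lam where lam: "\<forall>s\<in>S2 ! (h - n1). (0 < f2 (h - n1) s \<longrightarrow> strat_cost c S2 f2 s = lam) \<and> lam \<le> strat_cost c S2 f2 s"
          using f2(1) h2 unfolding wardrop_eq_def n2_def by blast
        show ?thesis using lam sc2[OF h2] False unfolding f_def n1_def by (auto simp: nth_append)
      qed
    qed
    show "eq_load_vector (R1 \<union> R2) c (S1 @ S2) \<mu> (X \<mu>)"
      unfolding eq_load_vector_def
    proof (rule exI[of _ f], intro conjI ballI weq)
      fix r assume "r \<in> R1 \<union> R2"
      then show "X \<mu> r = load (S1 @ S2) f r"
        unfolding X_def using f1(2) f2(2) lR1 lR2 by auto
    qed
  next
    fix \<mu> h t r assume a: "demand (S1 @ S2) \<mu> \<and> h < length (S1 @ S2) \<and> \<mu> h \<le> t \<and> r \<in> R1 \<union> R2"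
    then have dem: "demand (S1 @ S2) \<mu>" and h: "h < n1 + n2" and t: "\<mu> h \<le> t" and r: "r \<in> R1 \<union> R2"
      unfolding n1_def n2_def by auto
    show "X \<mu> r \<le> X (\<mu>(h := t)) r"
    proof (cases "h < n1")
      case True
      have e1: "trunc n1 (\<mu>(h := t)) = (trunc n1 \<mu>)(h := t)" using True unfolding trunc_def by auto
      have e2: "sh (\<mu>(h := t)) = sh \<mu>" using True unfolding sh_def trunc_def by auto
      have "X1 (trunc n1 \<mu>) r \<le> X1 ((trunc n1 \<mu>)(h := t)) r" if "r \<in> R1"
      proof -
        have "h < length S1" "trunc n1 \<mu> h \<le> t" using True t unfolding n1_def trunc_def by auto
        then show ?thesis using X1(2) dem1[OF dem] that by blast
      qed
      then show ?thesis unfolding X_def e1 e2 by auto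
    next
      case False
      have e1: "trunc n1 (\<mu>(h := t)) = trunc n1 \<mu>" using False unfolding trunc_def by auto
      have e2: "sh (\<mu>(h := t)) = (sh \<mu>)(h - n1 := t)" using False h unfolding sh_def trunc_def by (intro ext) auto
      have "X2 (sh \<mu>) r \<le> X2 ((sh \<mu>)(h - n1 := t)) r" if "r \<in> R2"
      proof -
        have "h - n1 < length S2" "sh \<mu> (h - n1) \<le> t" using False h t unfolding n2_def sh_def trunc_def by auto
        then show ?thesis using X2(2) dem2[OF dem] that by blast
      qed
      then show ?thesis unfolding X_def e1 e2 using r by auto
    qed
  qed
qed

definition UP :: "'r set set \<Rightarrow> 'r set set \<Rightarrow> 'r set set" where
  "UP A B = {s1 \<union> s2 | s1 s2. s1 \<in> A \<and> s2 \<in> B}"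

lemma prod_fams_Cons: "prod_fams (A # S1) S2 = map (UP A) S2 @ prod_fams S1 S2"
  unfolding prod_fams_def UP_def by simp

lemma prod_len: "length (prod_fams S1 S2) = length S1 * length S2"
  by (induction S1) (simp_all add: prod_fams_Cons, simp add: prod_fams_def)

lemma prod_nth: "k < length S1 * length S2 \<Longrightarrow>
   prod_fams S1 S2 ! k = UP (S1 ! (k div length S2)) (S2 ! (k mod length S2))"
proof (induction S1 arbitrary: k)
  case Nil then show ?case by simp
next
  case (Cons A S1)
  let ?n = "length S2"
  show ?case
  proof (cases "k < ?n")
    case True
    then show ?thesis by (simp add: prod_fams_Cons nth_append)
  next
    case False
    have k': "k - ?n < length S1 * ?n" using Cons.prems False by simp
    have npos: "0 < ?n" using Cons.prems by (cases "?n = 0") auto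
    have kk: "k = ?n + (k - ?n)" using False by simp
    have d: "k div ?n = Suc ((k - ?n) div ?n)" using div_add_self1[of ?n "k - ?n"] npos kk by simp
    have m: "k mod ?n = (k - ?n) mod ?n" using mod_add_self1[of ?n "k - ?n"] kk by simp
    show ?thesis using False Cons.IH[OF k'] by (simp add: prod_fams_Cons nth_append d m)
  qed
qed

lemma sum_prod_index: "(\<Sum>m<n1 * n2. F m) = (\<Sum>i<n1. \<Sum>j<n2. F (i * n2 + j))" for F :: "nat \<Rightarrow> real"
proof -
  have "(\<Sum>m<n1 * n2. F m) = (\<Sum>i<n1. sum F {i * n2..<i * n2 + n2})"
    by (rule sum.nat_group[symmetric])
  also have "\<dots> = (\<Sum>i<n1. \<Sum>j<n2. F (i * n2 + j))"
  proof -
    have "\<And>i. sum F {i * n2..<i * n2 + n2} = (\<Sum>j<n2. F (i * n2 + j))"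
    proof -
      fix i
      have "sum F {0 + i * n2..<n2 + i * n2} = sum (\<lambda>j. F (j + i * n2)) {0..<n2}"
        by (rule sum.shift_bounds_nat_ivl)
      then show "sum F {i * n2..<i * n2 + n2} = (\<Sum>j<n2. F (i * n2 + j))"
        by (simp add: atLeast0LessThan add.commute)
    qed
    then show ?thesis by simp
  qed
  finally show ?thesis .
qed

lemma idx: "i < n1 \<Longrightarrow> j < (n2::nat) \<Longrightarrow> (i * n2 + j) div n2 = i \<and> (i * n2 + j) mod n2 = j \<and> i * n2 + j < n1 * n2"
proof -
  assume i: "i < n1" and j: "j < n2"
  have "i * n2 + j < (i + 1) * n2" using j by simp
  also have "\<dots> \<le> n1 * n2" using i by (intro mult_right_mono) auto
  finally show ?thesis using j by simp
qed

lemma idx2: "m < n1 * (n2::nat) \<Longrightarrow> m div n2 < n1 \<and> m mod n2 < n2 \<and> m = (m div n2) * n2 + m mod n2"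
  by (metis div_mult_mod_eq less_mult_imp_div_less mod_less_divisor mult.commute mult_is_0 not_gr_zero not_less_zero)

lemma UP_sum:
  assumes fA: "finite A" and fB: "finite B" and A: "\<forall>s\<in>A. s \<subseteq> R1" and B: "\<forall>s\<in>B. s \<subseteq> R2"
    and disj: "R1 \<inter> R2 = {}"
  shows "(\<Sum>s\<in>UP A B. \<phi> s) = (\<Sum>s1\<in>A. \<Sum>s2\<in>B. \<phi> (s1 \<union> s2))"
proof -
  have img: "UP A B = (\<lambda>(s1, s2). s1 \<union> s2) ` (A \<times> B)" unfolding UP_def by auto
  have inj: "inj_on (\<lambda>(s1, s2). s1 \<union> s2) (A \<times> B)"
  proof (rule inj_onI, clarify)
    fix s1 s2 t1 t2 assume a: "s1 \<in> A" "s2 \<in> B" "t1 \<in> A" "t2 \<in> B" and e: "s1 \<union> s2 = t1 \<union> t2"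
    have ss: "s1 \<subseteq> R1" "t1 \<subseteq> R1" "s2 \<subseteq> R2" "t2 \<subseteq> R2" using a A B by auto
    have "s1 = (s1 \<union> s2) \<inter> R1" "t1 = (t1 \<union> t2) \<inter> R1" using ss disj by auto
    moreover have "s2 = (s1 \<union> s2) \<inter> R2" "t2 = (t1 \<union> t2) \<inter> R2" using ss disj by auto
    ultimately show "s1 = t1 \<and> s2 = t2" using e by metis
  qed
  show ?thesis unfolding img sum.reindex[OF inj] sum.cartesian_product by (simp add: case_prod_beta')
qed

lemma UP_cap: "s1 \<subseteq> R1 \<Longrightarrow> s2 \<subseteq> R2 \<Longrightarrow> R1 \<inter> R2 = {} \<Longrightarrow> (s1 \<union> s2) \<inter> R1 = s1 \<and> (s1 \<union> s2) \<inter> R2 = s2"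
  by auto

lemma wf_prod:
  assumes wf1: "wf_game R1 S1" and wf2: "wf_game R2 S2"
  shows "wf_game (R1 \<union> R2) (prod_fams S1 S2)"
  unfolding wf_game_def
proof (intro conjI ballI)
  show "finite (R1 \<union> R2)" using wf1 wf2 unfolding wf_game_def by auto
  fix F s assume F: "F \<in> set (prod_fams S1 S2)" and s: "s \<in> F"
  obtain m where m: "m < length (prod_fams S1 S2)" "F = prod_fams S1 S2 ! m" using F by (auto simp: in_set_conv_nth)
  have m': "m < length S1 * length S2" using m prod_len by metis
  note ix = idx2[OF m']
  have "F = UP (S1 ! (m div length S2)) (S2 ! (m mod length S2))" using m(2) prod_nth[OF m'] by simp
  then obtain s1 s2 where "s = s1 \<union> s2" "s1 \<in> S1 ! (m div length S2)" "s2 \<in> S2 ! (m mod length S2)"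
    using s unfolding UP_def by auto
  then show "s \<subseteq> R1 \<union> R2" using wf_sub[OF wf1] wf_sub[OF wf2] ix by blast
qed

lemma ne_prod:
  assumes "\<forall>h<length S1. S1 ! h \<noteq> {}" "\<forall>h<length S2. S2 ! h \<noteq> {}"
  shows "\<forall>h<length (prod_fams S1 S2). prod_fams S1 S2 ! h \<noteq> {}"
proof (intro allI impI)
  fix m assume "m < length (prod_fams S1 S2)"
  then have m': "m < length S1 * length S2" using prod_len by metis
  note ix = idx2[OF m']
  obtain s1 s2 where "s1 \<in> S1 ! (m div length S2)" "s2 \<in> S2 ! (m mod length S2)"
    using assms ix by blast
  then show "prod_fams S1 S2 ! m \<noteq> {}" unfolding prod_nth[OF m'] UP_def by blast
qed

lemma self_div: "0 \<le> x \<Longrightarrow> x \<le> y \<Longrightarrow> x * (y / y) = (x::real)"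
  by (cases "y = 0") auto

lemma div_self2: "0 \<le> x \<Longrightarrow> x \<le> y \<Longrightarrow> x / y * y = (x::real)"
  by (cases "y = 0") auto

lemma prod_flow:
  assumes wf1: "wf_game R1 S1" and wf2: "wf_game R2 S2" and disj: "R1 \<inter> R2 = {}"
    and n: "n1 = length S1" "n2 = length S2"
    and dem: "\<forall>m<n1 * n2. 0 \<le> \<mu> m"
    and nu: "\<forall>i<n1. \<nu> i = (\<Sum>j<n2. \<mu> (i * n2 + j))"
    and rho: "\<forall>j<n2. \<rho> j = (\<Sum>i<n1. \<mu> (i * n2 + j))"
    and ff1: "feasible_flow S1 \<nu> g" and ff2: "feasible_flow S2 \<rho> k"
    and f: "f = (\<lambda>m s. \<mu> m * (g (m div n2) (s \<inter> R1) / \<nu> (m div n2)) * (k (m mod n2) (s \<inter> R2) / \<rho> (m mod n2)))"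
  shows "feasible_flow (prod_fams S1 S2) \<mu> f"
    and "r \<in> R1 \<Longrightarrow> load (prod_fams S1 S2) f r = load S1 g r"
    and "r \<in> R2 \<Longrightarrow> load (prod_fams S1 S2) f r = load S2 k r"
proof -
  let ?S = "prod_fams S1 S2"
  have lenS: "length ?S = n1 * n2" using prod_len n by metis
  have wf: "wf_game (R1 \<union> R2) ?S" by (rule wf_prod[OF wf1 wf2])
  have mu_le: "\<mu> (i * n2 + j) \<le> \<nu> i" "\<mu> (i * n2 + j) \<le> \<rho> j" "0 \<le> \<mu> (i * n2 + j)"
    if ij: "i < n1" "j < n2" for i j
  proof -
    have nn: "0 \<le> \<mu> (i * n2 + j')" if "i < n1" "j' < n2" for i j' using dem idx[OF that] by auto
    show "0 \<le> \<mu> (i * n2 + j)" using nn ij .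
    show "\<mu> (i * n2 + j) \<le> \<nu> i" unfolding nu[rule_format, OF ij(1)]
      by (rule member_le_sum[where f="\<lambda>j. \<mu> (i * n2 + j)"]) (use ij nn in auto)
    show "\<mu> (i * n2 + j) \<le> \<rho> j" unfolding rho[rule_format, OF ij(2)]
      by (rule member_le_sum[where f="\<lambda>i. \<mu> (i * n2 + j)"]) (use ij nn in auto)
  qed
  have g_nn: "0 \<le> g i s" if "i < n1" "s \<in> S1 ! i" for i s using ff1 that n unfolding feasible_flow_def by auto
  have k_nn: "0 \<le> k j s" if "j < n2" "s \<in> S2 ! j" for j s using ff2 that n unfolding feasible_flow_def by auto
  have g_sum: "(\<Sum>s\<in>S1 ! i. g i s) = \<nu> i" if "i < n1" for i using ff1 that n unfolding feasible_flow_def by auto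
  have k_sum: "(\<Sum>s\<in>S2 ! j. k j s) = \<rho> j" if "j < n2" for j using ff2 that n unfolding feasible_flow_def by auto
  have finA: "finite (S1 ! i)" if "i < n1" for i using wf_fin_fam[OF wf1] that n by auto
  have finB: "finite (S2 ! j)" if "j < n2" for j using wf_fin_fam[OF wf2] that n by auto
  have subA: "\<forall>s\<in>S1 ! i. s \<subseteq> R1" if "i < n1" for i using wf_sub[OF wf1] that n by auto
  have subB: "\<forall>s\<in>S2 ! j. s \<subseteq> R2" if "j < n2" for j using wf_sub[OF wf2] that n by auto
  have nthS: "?S ! (i * n2 + j) = UP (S1 ! i) (S2 ! j)" if "i < n1" "j < n2" for i j
    using prod_nth[of "i * n2 + j" S1 S2] idx[OF that] n by simp
  have fval: "f (i * n2 + j) (s1 \<union> s2) = \<mu> (i * n2 + j) * (g i s1 / \<nu> i) * (k j s2 / \<rho> j)"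
    if "i < n1" "j < n2" "s1 \<in> S1 ! i" "s2 \<in> S2 ! j" for i j s1 s2
    using idx[OF that(1,2)] UP_cap[of s1 R1 s2 R2] subA[OF that(1)] subB[OF that(2)] that disj unfolding f by auto
  show ff: "feasible_flow ?S \<mu> f"
    unfolding feasible_flow_def
  proof (intro allI impI conjI ballI)
    fix m s assume m: "m < length ?S" and s: "s \<in> ?S ! m"
    then have m': "m < n1 * n2" using lenS by simp
    note ix = idx2[OF m']
    define i where "i = m div n2"
    define j where "j = m mod n2"
    have ij: "i < n1" "j < n2" "m = i * n2 + j" using ix unfolding i_def j_def by auto
    obtain s1 s2 where s12: "s = s1 \<union> s2" "s1 \<in> S1 ! i" "s2 \<in> S2 ! j"
      using s nthS[OF ij(1,2)] ij(3) unfolding UP_def by auto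
    have nu0: "0 \<le> \<nu> i" "0 \<le> \<rho> j" using mu_le[OF ij(1,2)] by linarith+
    show "0 \<le> f m s" unfolding ij(3) s12(1) fval[OF ij(1,2) s12(2,3)]
      using mu_le[OF ij(1,2)] g_nn[OF ij(1) s12(2)] k_nn[OF ij(2) s12(3)] nu0 by simp
  next
    fix m assume m: "m < length ?S"
    then have m': "m < n1 * n2" using lenS by simp
    note ix = idx2[OF m']
    define i where "i = m div n2"
    define j where "j = m mod n2"
    have ij: "i < n1" "j < n2" "m = i * n2 + j" using ix unfolding i_def j_def by auto
    have "(\<Sum>s\<in>?S ! m. f m s) = (\<Sum>s1\<in>S1 ! i. \<Sum>s2\<in>S2 ! j. f m (s1 \<union> s2))"
      unfolding ij(3) nthS[OF ij(1,2)] by (rule UP_sum[OF finA[OF ij(1)] finB[OF ij(2)] subA[OF ij(1)] subB[OF ij(2)] disj])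
    also have "\<dots> = (\<Sum>s1\<in>S1 ! i. \<Sum>s2\<in>S2 ! j. (\<mu> m * (g i s1 / \<nu> i)) * (k j s2 / \<rho> j))"
      unfolding ij(3) by (intro sum.cong refl) (simp add: fval[OF ij(1,2)])
    also have "\<dots> = (\<Sum>s1\<in>S1 ! i. \<mu> m * (g i s1 / \<nu> i)) * (\<Sum>s2\<in>S2 ! j. k j s2 / \<rho> j)"
      by (rule sum_product[symmetric])
    also have "\<dots> = (\<mu> m * (\<nu> i / \<nu> i)) * (\<rho> j / \<rho> j)"
      by (simp add: sum_distrib_left[symmetric] sum_divide_distrib[symmetric] g_sum[OF ij(1)] k_sum[OF ij(2)])
    also have "\<dots> = \<mu> m"
    proof -
      have e1: "\<mu> m * (\<nu> i / \<nu> i) = \<mu> m" using self_div[OF mu_le(3)[OF ij(1,2)] mu_le(1)[OF ij(1,2)]] ij(3) by simp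
      have e2: "\<mu> m * (\<rho> j / \<rho> j) = \<mu> m" using self_div[OF mu_le(3)[OF ij(1,2)] mu_le(2)[OF ij(1,2)]] ij(3) by simp
      show ?thesis by (simp only: e1 e2)
    qed
    finally show "(\<Sum>s\<in>?S ! m. f m s) = \<mu> m" .
  qed
  have load_expand: "load ?S f r = (\<Sum>i<n1. \<Sum>j<n2. \<Sum>s1\<in>S1 ! i. \<Sum>s2\<in>S2 ! j.
        if r \<in> s1 \<union> s2 then \<mu> (i * n2 + j) * (g i s1 / \<nu> i) * (k j s2 / \<rho> j) else 0)" for r
  proof -
    have "load ?S f r = (\<Sum>m<n1 * n2. \<Sum>s\<in>?S ! m. if r \<in> s then f m s else 0)"
      using load_alt[OF wf] lenS by simp
    also have "\<dots> = (\<Sum>i<n1. \<Sum>j<n2. \<Sum>s\<in>?S ! (i * n2 + j). if r \<in> s then f (i * n2 + j) s else 0)"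
      by (rule sum_prod_index)
    also have "\<dots> = (\<Sum>i<n1. \<Sum>j<n2. \<Sum>s1\<in>S1 ! i. \<Sum>s2\<in>S2 ! j.
        if r \<in> s1 \<union> s2 then \<mu> (i * n2 + j) * (g i s1 / \<nu> i) * (k j s2 / \<rho> j) else 0)"
    proof -
      have "(\<Sum>s\<in>?S ! (i * n2 + j). if r \<in> s then f (i * n2 + j) s else 0) = (\<Sum>s1\<in>S1 ! i. \<Sum>s2\<in>S2 ! j.
        if r \<in> s1 \<union> s2 then \<mu> (i * n2 + j) * (g i s1 / \<nu> i) * (k j s2 / \<rho> j) else 0)"
        if ij: "i < n1" "j < n2" for i j
      proof -
        have "(\<Sum>s\<in>?S ! (i * n2 + j). if r \<in> s then f (i * n2 + j) s else 0)
            = (\<Sum>s1\<in>S1 ! i. \<Sum>s2\<in>S2 ! j. if r \<in> s1 \<union> s2 then f (i * n2 + j) (s1 \<union> s2) else 0)"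
          unfolding nthS[OF ij] by (rule UP_sum[OF finA[OF ij(1)] finB[OF ij(2)] subA[OF ij(1)] subB[OF ij(2)] disj])
        also have "\<dots> = (\<Sum>s1\<in>S1 ! i. \<Sum>s2\<in>S2 ! j.
            if r \<in> s1 \<union> s2 then \<mu> (i * n2 + j) * (g i s1 / \<nu> i) * (k j s2 / \<rho> j) else 0)"
          by (intro sum.cong refl) (simp add: fval[OF ij])
        finally show ?thesis .
      qed
      then show ?thesis by simp
    qed
    finally show ?thesis .
  qed
  show "load ?S f r = load S1 g r" if r: "r \<in> R1"
  proof -
    define a where "a i = (\<Sum>s1\<in>S1 ! i. if r \<in> s1 then g i s1 else 0)" for i
    have a_le: "0 \<le> a i" "a i \<le> \<nu> i" if "i < n1" for i
    proof -
      show "0 \<le> a i" unfolding a_def using g_nn[OF that] by (intro sum_nonneg) auto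
      have "a i \<le> (\<Sum>s1\<in>S1 ! i. g i s1)" unfolding a_def using g_nn[OF that]
        by (intro sum_mono) auto
      then show "a i \<le> \<nu> i" using g_sum[OF that] by simp
    qed
    have inner: "(\<Sum>s1\<in>S1 ! i. \<Sum>s2\<in>S2 ! j.
        if r \<in> s1 \<union> s2 then \<mu> (i * n2 + j) * (g i s1 / \<nu> i) * (k j s2 / \<rho> j) else 0)
        = a i / \<nu> i * \<mu> (i * n2 + j)" if ij: "i < n1" "j < n2" for i j
    proof -
      have "(\<Sum>s1\<in>S1 ! i. \<Sum>s2\<in>S2 ! j.
        if r \<in> s1 \<union> s2 then \<mu> (i * n2 + j) * (g i s1 / \<nu> i) * (k j s2 / \<rho> j) else 0)
        = (\<Sum>s1\<in>S1 ! i. \<Sum>s2\<in>S2 ! j. ((if r \<in> s1 then g i s1 else 0) * (\<mu> (i * n2 + j) / \<nu> i)) * (k j s2 / \<rho> j))"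
      proof (intro sum.cong refl)
        fix s1 s2 assume "s1 \<in> S1 ! i" "s2 \<in> S2 ! j"
        then have "r \<notin> s2" using subB[OF ij(2)] r disj by auto
        then show "(if r \<in> s1 \<union> s2 then \<mu> (i * n2 + j) * (g i s1 / \<nu> i) * (k j s2 / \<rho> j) else 0) =
          ((if r \<in> s1 then g i s1 else 0) * (\<mu> (i * n2 + j) / \<nu> i)) * (k j s2 / \<rho> j)" by auto
      qed
      also have "\<dots> = (\<Sum>s1\<in>S1 ! i. (if r \<in> s1 then g i s1 else 0) * (\<mu> (i * n2 + j) / \<nu> i)) * (\<Sum>s2\<in>S2 ! j. k j s2 / \<rho> j)"
        by (rule sum_product[symmetric])
      also have "\<dots> = a i * (\<mu> (i * n2 + j) / \<nu> i) * (\<rho> j / \<rho> j)"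
        unfolding a_def by (simp add: sum_distrib_right[symmetric] sum_divide_distrib[symmetric] k_sum[OF ij(2)])
      also have "\<dots> = a i / \<nu> i * (\<mu> (i * n2 + j) * (\<rho> j / \<rho> j))" by simp
      also have "\<dots> = a i / \<nu> i * \<mu> (i * n2 + j)"
        using self_div[OF mu_le(3)[OF ij] mu_le(2)[OF ij]] by simp
      finally show ?thesis .
    qed
    have "load ?S f r = (\<Sum>i<n1. \<Sum>j<n2. a i / \<nu> i * \<mu> (i * n2 + j))"
      unfolding load_expand using inner by simp
    also have "\<dots> = (\<Sum>i<n1. a i / \<nu> i * \<nu> i)"
      using nu by (simp add: sum_distrib_left)
    also have "\<dots> = (\<Sum>i<n1. a i)" using div_self2[OF a_le] by simp
    also have "\<dots> = load S1 g r" unfolding load_alt[OF wf1] a_def n by simp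
    finally show ?thesis .
  qed
  show "load ?S f r = load S2 k r" if r: "r \<in> R2"
  proof -
    define b where "b j = (\<Sum>s2\<in>S2 ! j. if r \<in> s2 then k j s2 else 0)" for j
    have b_le: "0 \<le> b j" "b j \<le> \<rho> j" if "j < n2" for j
    proof -
      show "0 \<le> b j" unfolding b_def using k_nn[OF that] by (intro sum_nonneg) auto
      have "b j \<le> (\<Sum>s2\<in>S2 ! j. k j s2)" unfolding b_def using k_nn[OF that]
        by (intro sum_mono) auto
      then show "b j \<le> \<rho> j" using k_sum[OF that] by simp
    qed
    have inner: "(\<Sum>s1\<in>S1 ! i. \<Sum>s2\<in>S2 ! j.
        if r \<in> s1 \<union> s2 then \<mu> (i * n2 + j) * (g i s1 / \<nu> i) * (k j s2 / \<rho> j) else 0)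
        = b j / \<rho> j * \<mu> (i * n2 + j)" if ij: "i < n1" "j < n2" for i j
    proof -
      have "(\<Sum>s1\<in>S1 ! i. \<Sum>s2\<in>S2 ! j.
        if r \<in> s1 \<union> s2 then \<mu> (i * n2 + j) * (g i s1 / \<nu> i) * (k j s2 / \<rho> j) else 0)
        = (\<Sum>s1\<in>S1 ! i. \<Sum>s2\<in>S2 ! j. (g i s1 / \<nu> i) * ((if r \<in> s2 then k j s2 else 0) * (\<mu> (i * n2 + j) / \<rho> j)))"
      proof (intro sum.cong refl)
        fix s1 s2 assume "s1 \<in> S1 ! i" "s2 \<in> S2 ! j"
        then have "r \<notin> s1" using subA[OF ij(1)] r disj by auto
        then show "(if r \<in> s1 \<union> s2 then \<mu> (i * n2 + j) * (g i s1 / \<nu> i) * (k j s2 / \<rho> j) else 0) =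
          (g i s1 / \<nu> i) * ((if r \<in> s2 then k j s2 else 0) * (\<mu> (i * n2 + j) / \<rho> j))" by auto
      qed
      also have "\<dots> = (\<Sum>s1\<in>S1 ! i. g i s1 / \<nu> i) * (\<Sum>s2\<in>S2 ! j. (if r \<in> s2 then k j s2 else 0) * (\<mu> (i * n2 + j) / \<rho> j))"
        by (rule sum_product[symmetric])
      also have "\<dots> = (\<nu> i / \<nu> i) * (b j * (\<mu> (i * n2 + j) / \<rho> j))"
        unfolding b_def by (simp add: sum_distrib_right[symmetric] sum_divide_distrib[symmetric] g_sum[OF ij(1)])
      also have "\<dots> = b j / \<rho> j * (\<mu> (i * n2 + j) * (\<nu> i / \<nu> i))" by simp
      also have "\<dots> = b j / \<rho> j * \<mu> (i * n2 + j)"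
        using self_div[OF mu_le(3)[OF ij] mu_le(1)[OF ij]] by simp
      finally show ?thesis .
    qed
    have "load ?S f r = (\<Sum>i<n1. \<Sum>j<n2. b j / \<rho> j * \<mu> (i * n2 + j))"
      unfolding load_expand using inner by simp
    also have "\<dots> = (\<Sum>j<n2. \<Sum>i<n1. b j / \<rho> j * \<mu> (i * n2 + j))" by (rule sum.swap)
    also have "\<dots> = (\<Sum>j<n2. b j / \<rho> j * \<rho> j)"
      using rho by (simp add: sum_distrib_left)
    also have "\<dots> = (\<Sum>j<n2. b j)" using div_self2[OF b_le] by simp
    also have "\<dots> = load S2 k r" unfolding load_alt[OF wf2] b_def n by simp
    finally show ?thesis .
  qed
qed

lemma eq_idx: "j < n2 \<Longrightarrow> j' < (n2::nat) \<Longrightarrow> (i' * n2 + j' = i * n2 + j) \<longleftrightarrow> (i' = i \<and> j' = j)"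
proof
  assume j: "j < n2" "j' < n2" and e: "i' * n2 + j' = i * n2 + j"
  have "(i' * n2 + j') div n2 = (i * n2 + j) div n2" "(i' * n2 + j') mod n2 = (i * n2 + j) mod n2" using e by simp_all
  then show "i' = i \<and> j' = j" using j by simp
qed simp

lemma upd_split: "(\<mu>(m := t)) x = \<mu> x + (if x = m then t - \<mu> m else (0::real))"
  by simp

lemma sum_upd1:
  fixes \<mu> :: "nat \<Rightarrow> real" and n2 :: nat
  assumes j: "j < n2"
  shows "(\<Sum>j'<n2. (\<mu>(i * n2 + j := t)) (i' * n2 + j')) = (\<Sum>j'<n2. \<mu> (i' * n2 + j')) + (if i' = i then t - \<mu> (i * n2 + j) else 0)"
proof -
  have "(\<Sum>j'<n2. (\<mu>(i * n2 + j := t)) (i' * n2 + j')) = (\<Sum>j'<n2. \<mu> (i' * n2 + j')) +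
     (\<Sum>j'<n2. if j' = j \<and> i' = i then t - \<mu> (i * n2 + j) else 0)"
    unfolding upd_split sum.distrib using eq_idx[OF j] by (intro arg_cong2[where f="(+)"] refl sum.cong) auto
  also have "(\<Sum>j'<n2. if j' = j \<and> i' = i then t - \<mu> (i * n2 + j) else 0) = (if i' = i then t - \<mu> (i * n2 + j) else 0)"
    using sum_if_single[of "{..<n2}" j "\<lambda>_. i' = i"] j by simp
  finally show ?thesis .
qed

lemma sum_upd2:
  fixes \<mu> :: "nat \<Rightarrow> real" and n2 :: nat
  assumes j: "j < n2" and j': "j' < n2" and i: "i < n1"
  shows "(\<Sum>i'<n1. (\<mu>(i * n2 + j := t)) (i' * n2 + j')) = (\<Sum>i'<n1. \<mu> (i' * n2 + j')) + (if j' = j then t - \<mu> (i * n2 + j) else 0)"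
proof -
  have "(\<Sum>i'<n1. (\<mu>(i * n2 + j := t)) (i' * n2 + j')) = (\<Sum>i'<n1. \<mu> (i' * n2 + j')) +
     (\<Sum>i'<n1. if i' = i \<and> j' = j then t - \<mu> (i * n2 + j) else 0)"
    unfolding upd_split sum.distrib using eq_idx[OF j j'] by (intro arg_cong2[where f="(+)"] refl sum.cong) auto
  also have "(\<Sum>i'<n1. if i' = i \<and> j' = j then t - \<mu> (i * n2 + j) else 0) = (if j' = j then t - \<mu> (i * n2 + j) else 0)"
    using sum_if_single[of "{..<n1}" i "\<lambda>_. j' = j"] i by simp
  finally show ?thesis .
qed

lemma prod_MES:
  assumes wf1: "wf_game R1 S1" and wf2: "wf_game R2 S2" and disj: "R1 \<inter> R2 = {}"
    and M1: "has_MES R1 c S1" and M2: "has_MES R2 c S2"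
  shows "has_MES (R1 \<union> R2) c (prod_fams S1 S2)"
proof -
  define n1 where "n1 = length S1"
  define n2 where "n2 = length S2"
  let ?S = "prod_fams S1 S2"
  have lenS: "length ?S = n1 * n2" using prod_len n1_def n2_def by metis
  have wf: "wf_game (R1 \<union> R2) ?S" by (rule wf_prod[OF wf1 wf2])
  obtain X1 where X1: "\<forall>\<mu>. demand S1 \<mu> \<longrightarrow> eq_load_vector R1 c S1 \<mu> (X1 \<mu>)"
    "\<forall>\<mu> h t r. demand S1 \<mu> \<and> h < length S1 \<and> \<mu> h \<le> t \<and> r \<in> R1 \<longrightarrow> X1 \<mu> r \<le> X1 (\<mu>(h := t)) r"
    using M1 unfolding has_MES_def by blast
  obtain X2 where X2: "\<forall>\<mu>. demand S2 \<mu> \<longrightarrow> eq_load_vector R2 c S2 \<mu> (X2 \<mu>)"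
    "\<forall>\<mu> h t r. demand S2 \<mu> \<and> h < length S2 \<and> \<mu> h \<le> t \<and> r \<in> R2 \<longrightarrow> X2 \<mu> r \<le> X2 (\<mu>(h := t)) r"
    using M2 unfolding has_MES_def by blast
  define \<nu> where "\<nu> \<mu> i = (if i < n1 then (\<Sum>j<n2. \<mu> (i * n2 + j)) else 0)" for \<mu> :: "nat \<Rightarrow> real" and i
  define \<rho> where "\<rho> \<mu> j = (if j < n2 then (\<Sum>i<n1. \<mu> (i * n2 + j)) else 0)" for \<mu> :: "nat \<Rightarrow> real" and j
  define X where "X \<mu> r = (if r \<in> R1 then X1 (\<nu> \<mu>) r else X2 (\<rho> \<mu>) r)" for \<mu> r
  have demP: "\<forall>m<n1 * n2. 0 \<le> \<mu> m" if "demand ?S \<mu>" for \<mu> using that lenS unfolding demand_def by auto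
  have dem1: "demand S1 (\<nu> \<mu>)" if "demand ?S \<mu>" for \<mu>
    unfolding demand_def \<nu>_def using demP[OF that] idx[of _ n1 _ n2] n1_def by (auto intro!: sum_nonneg)
  have dem2: "demand S2 (\<rho> \<mu>)" if "demand ?S \<mu>" for \<mu>
    unfolding demand_def \<rho>_def using demP[OF that] idx[of _ n1 _ n2] n2_def by (auto intro!: sum_nonneg)
  show ?thesis
    unfolding has_MES_def
  proof (intro exI conjI allI impI)
    fix \<mu> assume dem: "demand ?S \<mu>"
    obtain g where g: "wardrop_eq c S1 (\<nu> \<mu>) g" "\<forall>r\<in>R1. X1 (\<nu> \<mu>) r = load S1 g r"
      using X1(1) dem1[OF dem] unfolding eq_load_vector_def by blast
    obtain k where k: "wardrop_eq c S2 (\<rho> \<mu>) k" "\<forall>r\<in>R2. X2 (\<rho> \<mu>) r = load S2 k r"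
      using X2(1) dem2[OF dem] unfolding eq_load_vector_def by blast
    define f where "f = (\<lambda>m s. \<mu> m * (g (m div n2) (s \<inter> R1) / \<nu> \<mu> (m div n2)) * (k (m mod n2) (s \<inter> R2) / \<rho> \<mu> (m mod n2)))"
    have ff1: "feasible_flow S1 (\<nu> \<mu>) g" and ff2: "feasible_flow S2 (\<rho> \<mu>) k" using g(1) k(1) unfolding wardrop_eq_def by auto
    have nu: "\<forall>i<n1. \<nu> \<mu> i = (\<Sum>j<n2. \<mu> (i * n2 + j))" unfolding \<nu>_def by simp
    have rho: "\<forall>j<n2. \<rho> \<mu> j = (\<Sum>i<n1. \<mu> (i * n2 + j))" unfolding \<rho>_def by simp
    note PF = prod_flow[OF wf1 wf2 disj n1_def n2_def demP[OF dem] nu rho ff1 ff2 f_def]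
    have sc: "strat_cost c ?S f (s1 \<union> s2) = strat_cost c S1 g s1 + strat_cost c S2 k s2"
      if "i < n1" "j < n2" "s1 \<in> S1 ! i" "s2 \<in> S2 ! j" for i j s1 s2
    proof -
      have s1: "s1 \<subseteq> R1" "finite s1" using wf_sub[OF wf1] wf_fin_strat[OF wf1] that n1_def by auto
      have s2: "s2 \<subseteq> R2" "finite s2" using wf_sub[OF wf2] wf_fin_strat[OF wf2] that n2_def by auto
      have "strat_cost c ?S f (s1 \<union> s2) = (\<Sum>r\<in>s1. c r (load ?S f r)) + (\<Sum>r\<in>s2. c r (load ?S f r))"
        unfolding strat_cost_def by (rule sum.union_disjoint) (use s1 s2 disj in auto)
      also have "\<dots> = strat_cost c S1 g s1 + strat_cost c S2 k s2"
        unfolding strat_cost_def using PF(2,3) s1 s2 by (intro arg_cong2[where f="(+)"] sum.cong) auto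
      finally show ?thesis .
    qed
    have weq: "wardrop_eq c ?S \<mu> f"
      unfolding wardrop_eq_def
    proof (intro conjI PF(1) allI impI)
      fix m assume m: "m < length ?S"
      then have m': "m < n1 * n2" using lenS by simp
      note ix = idx2[OF m']
      define i where "i = m div n2"
      define j where "j = m mod n2"
      have ij: "i < n1" "j < n2" "m = i * n2 + j" using ix unfolding i_def j_def by auto
      obtain lam1 where lam1: "\<forall>s\<in>S1 ! i. (0 < g i s \<longrightarrow> strat_cost c S1 g s = lam1) \<and> lam1 \<le> strat_cost c S1 g s"
        using g(1) ij n1_def unfolding wardrop_eq_def by blast
      obtain lam2 where lam2: "\<forall>s\<in>S2 ! j. (0 < k j s \<longrightarrow> strat_cost c S2 k s = lam2) \<and> lam2 \<le> strat_cost c S2 k s"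
        using k(1) ij n2_def unfolding wardrop_eq_def by blast
      show "\<exists>lam. \<forall>s\<in>?S ! m. (0 < f m s \<longrightarrow> strat_cost c ?S f s = lam) \<and> lam \<le> strat_cost c ?S f s"
      proof (intro exI[of _ "lam1 + lam2"] ballI conjI impI)
        fix s assume s: "s \<in> ?S ! m"
        have nth: "?S ! m = UP (S1 ! i) (S2 ! j)" using prod_nth[of m S1 S2] m' n1_def n2_def i_def j_def by simp
        obtain s1 s2 where s12: "s = s1 \<union> s2" "s1 \<in> S1 ! i" "s2 \<in> S2 ! j" using s nth unfolding UP_def by auto
        have cs: "strat_cost c ?S f s = strat_cost c S1 g s1 + strat_cost c S2 k s2" using sc[OF ij(1,2) s12(2,3)] s12(1) by simp
        show "lam1 + lam2 \<le> strat_cost c ?S f s" using cs lam1 lam2 s12 by (simp add: add_mono)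
        assume pos: "0 < f m s"
        have caps: "s \<inter> R1 = s1" "s \<inter> R2 = s2"
          using UP_cap[of s1 R1 s2 R2] wf_sub[OF wf1] wf_sub[OF wf2] s12 ij n1_def n2_def disj by auto
        have fv: "f m s = \<mu> m * (g i s1 / \<nu> \<mu> i) * (k j s2 / \<rho> \<mu> j)" unfolding f_def caps i_def j_def by simp
        have "g i s1 \<noteq> 0" "k j s2 \<noteq> 0" using pos fv by auto
        moreover have "0 \<le> g i s1" "0 \<le> k j s2" using ff1 ff2 s12 ij n1_def n2_def unfolding feasible_flow_def by auto
        ultimately have "0 < g i s1" "0 < k j s2" by auto
        then show "strat_cost c ?S f s = lam1 + lam2" using cs lam1 lam2 s12 by simp
      qed
    qed
    show "eq_load_vector (R1 \<union> R2) c ?S \<mu> (X \<mu>)"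
      unfolding eq_load_vector_def
    proof (rule exI[of _ f], intro conjI ballI weq)
      fix r assume "r \<in> R1 \<union> R2"
      then show "X \<mu> r = load ?S f r" unfolding X_def using g(2) k(2) PF(2,3) disj by auto
    qed
  next
    fix \<mu> m t r assume a: "demand ?S \<mu> \<and> m < length ?S \<and> \<mu> m \<le> t \<and> r \<in> R1 \<union> R2"
    then have dem: "demand ?S \<mu>" and m: "m < n1 * n2" and t: "\<mu> m \<le> t" and r: "r \<in> R1 \<union> R2"
      using lenS by auto
    note ix = idx2[OF m]
    define i where "i = m div n2"
    define j where "j = m mod n2"
    have ij: "i < n1" "j < n2" "m = i * n2 + j" using ix unfolding i_def j_def by auto
    have e1: "\<nu> (\<mu>(m := t)) = (\<nu> \<mu>)(i := \<nu> \<mu> i + (t - \<mu> m))"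
    proof
      fix i' show "\<nu> (\<mu>(m := t)) i' = ((\<nu> \<mu>)(i := \<nu> \<mu> i + (t - \<mu> m))) i'"
        unfolding \<nu>_def ij(3) using sum_upd1[OF ij(2), of \<mu> i t i'] ij by auto
    qed
    have e2: "\<rho> (\<mu>(m := t)) = (\<rho> \<mu>)(j := \<rho> \<mu> j + (t - \<mu> m))"
    proof
      fix j' show "\<rho> (\<mu>(m := t)) j' = ((\<rho> \<mu>)(j := \<rho> \<mu> j + (t - \<mu> m))) j'"
        unfolding \<rho>_def ij(3) using sum_upd2[OF ij(2) _ ij(1), of j' \<mu> t] ij by auto
    qed
    have m1: "X1 (\<nu> \<mu>) r \<le> X1 ((\<nu> \<mu>)(i := \<nu> \<mu> i + (t - \<mu> m))) r" if "r \<in> R1"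
    proof -
      have "i < length S1" "\<nu> \<mu> i \<le> \<nu> \<mu> i + (t - \<mu> m)" using ij t n1_def by auto
      then show ?thesis using X1(2) dem1[OF dem] that by blast
    qed
    have m2: "X2 (\<rho> \<mu>) r \<le> X2 ((\<rho> \<mu>)(j := \<rho> \<mu> j + (t - \<mu> m))) r" if "r \<in> R2"
    proof -
      have "j < length S2" "\<rho> \<mu> j \<le> \<rho> \<mu> j + (t - \<mu> m)" using ij t n2_def by auto
      then show ?thesis using X2(2) dem2[OF dem] that by blast
    qed
    show "X \<mu> r \<le> X (\<mu>(m := t)) r" unfolding X_def e1 e2 using m1 m2 r by auto
  qed
qed

lemma main_induct:
  "product_union R S \<Longrightarrow> wf_game R S \<and> (\<forall>h<length S. S ! h \<noteq> {}) \<and> (\<forall>c. admissible_costs R c \<longrightarrow> has_MES R c S)"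
proof (induction rule: product_union.induct)
  case (singleton R S)
  have wf: "wf_game R S" unfolding wf_game_def using singleton by auto
  have sg: "sing R S" unfolding sing_def using singleton by auto
  have ne: "\<forall>h<length S. S ! h \<noteq> {}" using singleton by auto
  show ?case using wf sg ne sing_MES by blast
next
  case (product R1 S1 R2 S2)
  show ?case
  proof (intro conjI allI impI)
    show "wf_game (R1 \<union> R2) (prod_fams S1 S2)" using wf_prod product by blast
    show "\<And>h. h < length (prod_fams S1 S2) \<Longrightarrow> prod_fams S1 S2 ! h \<noteq> {}" using ne_prod product by blast
    fix c assume "admissible_costs (R1 \<union> R2) c"
    then have "admissible_costs R1 c" "admissible_costs R2 c" using adm_sub by blast+
    then show "has_MES (R1 \<union> R2) c (prod_fams S1 S2)" using prod_MES product by blast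
  qed
next
  case (union R1 S1 R2 S2)
  show ?case
  proof (intro conjI allI impI)
    show "wf_game (R1 \<union> R2) (S1 @ S2)" using wf_append union by blast
    show "\<And>h. h < length (S1 @ S2) \<Longrightarrow> (S1 @ S2) ! h \<noteq> {}" using union by (auto simp: nth_append)
    fix c assume "admissible_costs (R1 \<union> R2) c"
    then have "admissible_costs R1 c" "admissible_costs R2 c" using adm_sub by blast+
    then show "has_MES (R1 \<union> R2) c (S1 @ S2)" using union_MES union by blast
  qed
qed

theorem theorem5p2:
  fixes R :: "'r set" and S :: "'r strat_fam" and c :: "'r \<Rightarrow> real \<Rightarrow> real"
  assumes "product_union R S"
    and "admissible_costs R c"
  shows "has_MES R c S"
  using main_induct[OF assms(1)] assms(2) by blast

end
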